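(* Let $n\ge 1$ and $m\ge 1$ be integers and let $H_m(\mathbb B)$ be the analytic functional Hilbert space on the open unit ball $\mathbb B\subset\mathbb C^n$ with reproducing kernel $K_m(z,w)=(1-\langle z,w\rangle)^{-m}$. Let $g,h\in H_m(\mathbb B)$ and let $T\in L(H_m(\mathbb B))$ be a bounded Toeplitz operator with pluriharmonic symbol $f=g+\overline h$, i.e. $Tp=T_gp+T_h^*p$ for all $p\in\mathbb C[z]$. Then \[ M^{\prime *}_zTM^\prime_z = P_{{\rm Im}M^*_z}\Big(\oplus \sum^{m-1}_{j=0}(-1)^j\binom{m}{j+1}\sigma^j_{M_z}(T)\Big)P_{{\rm Im}M^*_z}. \]
   Context: $H_m(\mathbb B)=\{f=\sum_{\alpha\in\mathbb N^n}f_\alpha z^\alpha\in\mathcal O(\mathbb B):\ \|f\|^2=\sum_\alpha |f_\alpha|^2/\rho_m(\alpha)<\infty\}$ with $\rho_m(\alpha)=\frac{(m+|\alpha|-1)!}{\alpha!(m-1)!}$; the monomials are orthogonal and polynomials are dense. Let $\mathbb H_k$ denote the space of homogeneous polynomials of degree $k$, so $H_m(\mathbb B)$ is the orthogonal sum of the $\mathbb H_k$, and every $f$ has homogeneous expansion $f=\sum_k f_k$, $f_k\in\mathbb H_k$. $M_z:H_m(\mathbb B)^n\to H_m(\mathbb B)$, $(f_i)\mapsto\sum_i z_if_i$, is the row multiplication operator (it has closed range), $M_z^*:H_m(\mathbb B)\to H_m(\mathbb B)^n$, $f\mapsto (M_{z_i}^*f)_i$, is its adjoint, and $P_{{\rm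 Im}M_z^*}$ is the orthogonal projection of $H_m(\mathbb B)^n$ onto the closed range of $M_z^*$. Let $\delta\in L(H_m(\mathbb B))$ be the diagonal operator $\delta(\sum_k f_k)=f_0+\sum_{k\ge1}\frac{m+k-1}{k}f_k$, and define $M_z'=\delta M_z:H_m(\mathbb B)^n\to H_m(\mathbb B)$, with adjoint $M_z'^*$. For $X\in L(H_m(\mathbb B))$, $\sigma_{M_z}(X)=\sum_{i=1}^n M_{z_i}XM_{z_i}^*$, $\sigma^j_{M_z}$ is its $j$-th iterate ($\sigma^0_{M_z}(X)=X$), and $\oplus X$ denotes $X\oplus\cdots\oplus X$ ($n$ copies) on $H_m(\mathbb B)^n$. For $u\in H_m(\mathbb B)$, $T_u$ denotes the densely defined closed multiplication operator $D_u\to H_m(\mathbb B)$, $v\mapsto uv$, with domain $D_u=\{v\in H_m(\mathbb B): uv\in H_m(\mathbb B)\}\supset\mathbb C[z]$, and $T_u^*$ its Hilbert space adjoint; the polynomials lie in the domain of $T_u^*$ and $T_u^*z^\alpha=\sum_{0\le\beta\le\alpha}\frac{\rho_m(\alpha-\beta)}{\rho_m(\alpha)}\overline{u_\beta}z^{\alpha-\beta}$. A bounded operator $T$ on $H_m(\mathbb B)$ is called a Toeplitz operator with pluriharmonic symbol $f$ if there are $g,h\in H_m(\mathbb B)$ with $f=g+\overline h$ and $Tp=T_gp+T_h^*p$ for all $p\in\mathbb C[z]$. *)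

theory Defs
  imports "HOL-Analysis.Analysis" "HOL-Library.Function_Algebras"
begin

text \<open>Concrete model of H_m(B) on the unit ball of C^n, n = CARD('n):
  a function is represented by its Taylor coefficients, indexed by
  multi-indices 'n \<Rightarrow> nat.  Elements of H_m(B)^n are maps 'n \<Rightarrow> coefficient map.\<close>

type_synonym 'n coeffs = "('n \<Rightarrow> nat) \<Rightarrow> complex"

definition mdeg :: "('n::finite \<Rightarrow> nat) \<Rightarrow> nat" where
  "mdeg \<alpha> = (\<Sum>i\<in>UNIV. \<alpha> i)"

definition rho :: "nat \<Rightarrow> ('n::finite \<Rightarrow> nat) \<Rightarrow> real" where
  "rho m \<alpha> = real (fact (m + mdeg \<alpha> - 1)) /
      (real (\<Prod>i\<in>UNIV. fact (\<alpha> i)) * real (fact (m - 1)))"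

definition inH :: "nat \<Rightarrow> 'n::finite coeffs \<Rightarrow> bool" where
  "inH m f \<longleftrightarrow> (\<lambda>\<alpha>. (cmod (f \<alpha>))\<^sup>2 / rho m \<alpha>) summable_on UNIV"

definition innerH :: "nat \<Rightarrow> 'n::finite coeffs \<Rightarrow> 'n coeffs \<Rightarrow> complex" where
  "innerH m f g = (\<Sum>\<^sub>\<infinity>\<alpha>. f \<alpha> * cnj (g \<alpha>) / complex_of_real (rho m \<alpha>))"

definition normH :: "nat \<Rightarrow> 'n::finite coeffs \<Rightarrow> real" where
  "normH m f = sqrt (Re (innerH m f f))"

definition inHn :: "nat \<Rightarrow> ('n::finite \<Rightarrow> 'n coeffs) \<Rightarrow> bool" where
  "inHn m F \<longleftrightarrow> (\<forall>i. inH m (F i))"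

definition innerHn :: "nat \<Rightarrow> ('n::finite \<Rightarrow> 'n coeffs) \<Rightarrow> ('n \<Rightarrow> 'n coeffs) \<Rightarrow> complex" where
  "innerHn m F G = (\<Sum>i\<in>UNIV. innerH m (F i) (G i))"

definition normHn :: "nat \<Rightarrow> ('n::finite \<Rightarrow> 'n coeffs) \<Rightarrow> real" where
  "normHn m F = sqrt (Re (innerHn m F F))"

definition smul :: "complex \<Rightarrow> 'n coeffs \<Rightarrow> 'n coeffs" where
  "smul c f = (\<lambda>\<alpha>. c * f \<alpha>)"

text \<open>Bounded linear operators on H_m(B) (values outside H_m(B) irrelevant).\<close>
definition bdd_op :: "nat \<Rightarrow> ('n::finite coeffs \<Rightarrow> 'n coeffs) \<Rightarrow> bool" where
  "bdd_op m A \<longleftrightarrow> (\<forall>f. inH m f \<longrightarrow> inH m (A f)) \<and>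
     (\<forall>f g. inH m f \<longrightarrow> inH m g \<longrightarrow> A (f + g) = A f + A g) \<and>
     (\<forall>c f. inH m f \<longrightarrow> A (smul c f) = smul c (A f)) \<and>
     (\<exists>C. \<forall>f. inH m f \<longrightarrow> normH m (A f) \<le> C * normH m f)"

definition hadj :: "('a \<Rightarrow> bool) \<Rightarrow> ('a \<Rightarrow> 'a \<Rightarrow> complex) \<Rightarrow>
    ('b \<Rightarrow> bool) \<Rightarrow> ('b \<Rightarrow> 'b \<Rightarrow> complex) \<Rightarrow> ('a \<Rightarrow> 'b) \<Rightarrow> ('b \<Rightarrow> 'a)" where
  "hadj inA ipA inB ipB A = (SOME B. (\<forall>y. inB y \<longrightarrow> inA (B y)) \<and>
      (\<forall>x y. inA x \<longrightarrow> inB y \<longrightarrow> ipB (A x) y = ipA x (B y)))"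

definition orth_proj :: "('a::minus \<Rightarrow> 'a \<Rightarrow> complex) \<Rightarrow> 'a set \<Rightarrow> 'a \<Rightarrow> 'a" where
  "orth_proj ip S x = (THE y. y \<in> S \<and> (\<forall>s\<in>S. ip (x - y) s = 0))"

definition mult_z :: "'n \<Rightarrow> 'n coeffs \<Rightarrow> 'n coeffs" where
  "mult_z i f = (\<lambda>\<alpha>. if \<alpha> i = 0 then 0 else f (\<alpha>(i := \<alpha> i - 1)))"

definition Mz :: "('n::finite \<Rightarrow> 'n coeffs) \<Rightarrow> 'n coeffs" where
  "Mz F = (\<Sum>i\<in>UNIV. mult_z i (F i))"

definition Mz_adj :: "nat \<Rightarrow> 'n::finite coeffs \<Rightarrow> ('n \<Rightarrow> 'n coeffs)" where
  "Mz_adj m = hadj (inHn m) (innerHn m) (inH m) (innerH m) Mz"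

definition delta :: "nat \<Rightarrow> 'n::finite coeffs \<Rightarrow> 'n coeffs" where
  "delta m f = (\<lambda>\<alpha>. if mdeg \<alpha> = 0 then f \<alpha>
      else complex_of_real (real (m + mdeg \<alpha> - 1) / real (mdeg \<alpha>)) * f \<alpha>)"

definition Mz' :: "nat \<Rightarrow> ('n::finite \<Rightarrow> 'n coeffs) \<Rightarrow> 'n coeffs" where
  "Mz' m F = delta m (Mz F)"

definition Mz'_adj :: "nat \<Rightarrow> 'n::finite coeffs \<Rightarrow> ('n \<Rightarrow> 'n coeffs)" where
  "Mz'_adj m = hadj (inHn m) (innerHn m) (inH m) (innerH m) (Mz' m)"

definition range_Mz_adj :: "nat \<Rightarrow> ('n::finite \<Rightarrow> 'n coeffs) set" where
  "range_Mz_adj m = {F. inHn m F \<and>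
     (\<forall>e>0. \<exists>f. inH m f \<and> normHn m (F - Mz_adj m f) < e)}"

definition P_Im :: "nat \<Rightarrow> ('n::finite \<Rightarrow> 'n coeffs) \<Rightarrow> ('n \<Rightarrow> 'n coeffs)" where
  "P_Im m = orth_proj (innerHn m) (range_Mz_adj m)"

definition sigma_Mz :: "nat \<Rightarrow> ('n::finite coeffs \<Rightarrow> 'n coeffs) \<Rightarrow> ('n coeffs \<Rightarrow> 'n coeffs)" where
  "sigma_Mz m X = (\<lambda>f. \<Sum>i\<in>UNIV.
      mult_z i (X (hadj (inH m) (innerH m) (inH m) (innerH m) (mult_z i) f)))"

definition cprod :: "'n::finite coeffs \<Rightarrow> 'n coeffs \<Rightarrow> 'n coeffs" where
  "cprod u v = (\<lambda>\<alpha>. \<Sum>\<beta>\<in>{\<beta>. \<beta> \<le> \<alpha>}. u \<beta> * v (\<alpha> - \<beta>))"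

definition is_poly :: "'n coeffs \<Rightarrow> bool" where
  "is_poly p \<longleftrightarrow> finite {\<alpha>. p \<alpha> \<noteq> 0}"

text \<open>Adjoint T_u^* of the densely defined multiplication operator T_u with
  domain D_u = {v \<in> H_m. uv \<in> H_m}, evaluated at y (in its domain).\<close>
definition Tmult_adj :: "nat \<Rightarrow> 'n::finite coeffs \<Rightarrow> 'n coeffs \<Rightarrow> 'n coeffs" where
  "Tmult_adj m u y = (THE z. inH m z \<and> (\<forall>x. inH m x \<longrightarrow> inH m (cprod u x) \<longrightarrow>
       innerH m (cprod u x) y = innerH m x z))"

end

theory Submission
  imports Defs "HOL-Computational_Algebra.Formal_Power_Series"
begin

definition up :: "'n \<Rightarrow> ('n \<Rightarrow> nat) \<Rightarrow> ('n \<Rightarrow> nat)" where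
  "up i \<alpha> = \<alpha>(i := Suc (\<alpha> i))"

lemma mdeg_upd: "mdeg (\<alpha>(i := v)) + \<alpha> i = mdeg \<alpha> + (v::nat)"
proof -
  have "mdeg (\<alpha>(i := v)) = v + (\<Sum>j\<in>UNIV-{i}. \<alpha> j)"
    unfolding mdeg_def by (subst sum.remove[of UNIV i]) auto
  moreover have "mdeg \<alpha> = \<alpha> i + (\<Sum>j\<in>UNIV-{i}. \<alpha> j)"
    unfolding mdeg_def by (subst sum.remove[of UNIV i]) auto
  ultimately show ?thesis by simp
qed

lemma mdeg_up[simp]: "mdeg (up i \<alpha>) = Suc (mdeg \<alpha>)"
  using mdeg_upd[of \<alpha> i "Suc (\<alpha> i)"] unfolding up_def by simp

lemma le_mdeg: "\<alpha> i \<le> mdeg \<alpha>"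
  unfolding mdeg_def by (rule member_le_sum) auto

lemma mdeg_eq_0_iff: "mdeg \<alpha> = 0 \<longleftrightarrow> \<alpha> = 0"
  unfolding mdeg_def by (auto simp: fun_eq_iff)

lemma up_inj: "up i \<alpha> = up i \<beta> \<Longrightarrow> \<alpha> = \<beta>"
  unfolding up_def by (auto simp: fun_eq_iff split: if_splits)

lemma up_ne0: "up i \<alpha> \<noteq> 0"
  unfolding up_def by (auto simp: fun_eq_iff)

lemma up_down: "\<alpha> i \<noteq> 0 \<Longrightarrow> up i (\<alpha>(i := \<alpha> i - 1)) = \<alpha>"
  unfolding up_def by (auto simp: fun_eq_iff)

lemma down_up: "(up i \<alpha>)(i := up i \<alpha> i - 1) = \<alpha>"
  unfolding up_def by (auto simp: fun_eq_iff)

lemma up_i[simp]: "up i \<alpha> i = Suc (\<alpha> i)"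
  unfolding up_def by simp

lemma prod_fact_up: fixes \<alpha> :: "'n::finite \<Rightarrow> nat" shows "(\<Prod>j\<in>UNIV. fact (up i \<alpha> j) :: nat) = Suc (\<alpha> i) * (\<Prod>j\<in>UNIV. fact (\<alpha> j))"
proof -
  have "(\<Prod>j\<in>UNIV. fact (up i \<alpha> j) :: nat) = fact (Suc (\<alpha> i)) * (\<Prod>j\<in>UNIV-{i}. fact (\<alpha> j))"
    by (subst prod.remove[of UNIV i]) (auto simp: up_def intro!: prod.cong)
  moreover have "(\<Prod>j\<in>UNIV. fact (\<alpha> j) :: nat) = fact (\<alpha> i) * (\<Prod>j\<in>UNIV-{i}. fact (\<alpha> j))"
    by (subst prod.remove[of UNIV i]) auto
  ultimately show ?thesis by (simp add: algebra_simps)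
qed

context fixes m :: nat assumes m1: "1 \<le> m"
begin

lemma rho_pos: "rho m \<alpha> > 0"
  unfolding rho_def by (auto intro!: divide_pos_pos mult_pos_pos simp: prod_pos)

lemma rho_step: "rho m (up i \<alpha>) = rho m \<alpha> * real (m + mdeg \<alpha>) / real (Suc (\<alpha> i))"
proof -
  have f: "fact (m + mdeg \<alpha>) = real (m + mdeg \<alpha>) * fact (m + mdeg \<alpha> - 1)"
    using m1 by (metis Suc_diff_1 add_gr_0 fact_Suc less_le_trans of_nat_mult zero_less_one fact_reduce)
  show ?thesis
    unfolding rho_def using m1
    by (simp add: prod_fact_up f field_simps del: of_nat_Suc) (simp add: algebra_simps)
qed

lemma rho0: "rho m (0::'n::finite \<Rightarrow> nat) = 1"
  unfolding rho_def mdeg_def by simp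

lemma rho_le_up: "rho m \<alpha> \<le> rho m (up i \<alpha>)"
proof -
  have "real (Suc (\<alpha> i)) \<le> real (m + mdeg \<alpha>)" using le_mdeg[of \<alpha> i] m1 by simp
  then have "1 \<le> real (m + mdeg \<alpha>) / real (Suc (\<alpha> i))" by simp
  then show ?thesis unfolding rho_step using rho_pos[of \<alpha>]
    by (metis mult_le_cancel_left1 times_divide_eq_right less_le_not_le)
qed

end

lemma fun_sum_apply: "(\<Sum>i\<in>I. f i) x = (\<Sum>i\<in>I. f i x)"
  by (induction I rule: infinite_finite_induct) auto

definition nsq :: "nat \<Rightarrow> 'n::finite coeffs \<Rightarrow> real" where
  "nsq m f = (\<Sum>\<^sub>\<infinity>\<alpha>. (cmod (f \<alpha>))\<^sup>2 / rho m \<alpha>)"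

definition emon :: "('n \<Rightarrow> nat) \<Rightarrow> 'n coeffs" where
  "emon \<beta> = (\<lambda>\<alpha>. if \<alpha> = \<beta> then 1 else 0)"

lemma cmod_add_sq: "(cmod (a+b))\<^sup>2 \<le> 2*(cmod a)\<^sup>2 + 2*(cmod b)\<^sup>2"
proof -
  have "cmod (a+b) \<le> cmod a + cmod b" by (rule norm_triangle_ineq)
  then have "(cmod (a+b))\<^sup>2 \<le> (cmod a + cmod b)\<^sup>2" by (simp add: power_mono)
  also have "\<dots> \<le> 2*(cmod a)\<^sup>2 + 2*(cmod b)\<^sup>2"
    using zero_le_square[of "cmod a - cmod b"] by (simp add: power2_eq_square algebra_simps)
  finally show ?thesis .
qed

lemma amgm_t: assumes "t > 0" shows "2 * (x * (y::real)) \<le> t * x\<^sup>2 + y\<^sup>2 / t"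
proof -
  have "0 \<le> (t*x - y)\<^sup>2 / t" using assms by simp
  also have "(t*x - y)\<^sup>2 / t = t * x\<^sup>2 + y\<^sup>2 / t - 2 * (x * y)"
    using assms by (simp add: power2_eq_square field_simps)
  finally show ?thesis by simp
qed

lemma opt_t:
  fixes x A B :: real
  assumes "A \<ge> 0" "B \<ge> 0" "\<And>t. t > 0 \<Longrightarrow> 2 * x \<le> t * A + B / t"
  shows "x \<le> sqrt A * sqrt B"
proof (cases "A > 0 \<and> B > 0")
  case True
  define t where "t = sqrt B / sqrt A"
  have tp: "t > 0" using True by (simp add: t_def)
  have sA: "sqrt A * sqrt A = A" "sqrt B * sqrt B = B" using assms(1,2) by auto
  have pA: "sqrt A > 0" using True by simp
  have "t * A = sqrt A * sqrt B" unfolding t_def using pA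
    by (subst (2) sA(1)[symmetric]) (simp add: field_simps)
  moreover have "B / t = sqrt A * sqrt B" unfolding t_def using True pA
    by (subst sA(2)[symmetric]) (simp add: field_simps)
  ultimately show ?thesis using assms(3)[OF tp] by simp
next
  case False
  then have "A = 0 \<or> B = 0" using assms by auto
  show ?thesis
  proof (rule ccontr)
    assume "\<not> ?thesis"
    then have xp: "x > 0" using \<open>A = 0 \<or> B = 0\<close> by auto
    show False
    proof (cases "A = 0")
      case True
      have "2 * x \<le> B / ((B+1)/x)" using assms(3)[of "(B+1)/x"] xp assms True by simp
      also have "\<dots> = x * (B / (B+1))" using assms by (simp add: field_simps)
      also have "\<dots> < x * 1" using xp assms by (intro mult_strict_left_mono) auto
      finally show False using xp by simp
    next
      case False
      then have B0: "B = 0" "A > 0" using \<open>A = 0 \<or> B = 0\<close> assms by auto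
      have "2 * x \<le> (x / A) * A" using assms(3)[of "x/A"] xp B0 by simp
      then show False using xp B0 by simp
    qed
  qed
qed

context fixes m :: nat assumes m1: "1 \<le> m"
begin

lemma rho_pos': "rho m \<alpha> > 0" using rho_pos[OF m1] .

lemma inH_summable: "inH m f \<Longrightarrow> (\<lambda>\<alpha>. (cmod (f \<alpha>))\<^sup>2 / rho m \<alpha>) summable_on UNIV"
  unfolding inH_def .

lemma nsq_nonneg: "nsq m f \<ge> 0"
  unfolding nsq_def by (rule infsum_nonneg) (simp add: rho_pos' less_imp_le)

lemma inH_add: assumes "inH m f" "inH m g" shows "inH m (f + g)"
proof -
  have s: "(\<lambda>\<alpha>. 2 * ((cmod (f \<alpha>))\<^sup>2 / rho m \<alpha>) + 2 * ((cmod (g \<alpha>))\<^sup>2 / rho m \<alpha>)) summable_on UNIV"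
    using assms unfolding inH_def by (intro summable_on_add summable_on_cmult_right)
  show ?thesis unfolding inH_def
  proof (rule summable_on_comparison_test[OF s])
    fix \<alpha>
    have "(cmod ((f+g) \<alpha>))\<^sup>2 / rho m \<alpha> \<le> (2*(cmod (f \<alpha>))\<^sup>2 + 2*(cmod (g \<alpha>))\<^sup>2) / rho m \<alpha>"
      using cmod_add_sq[of "f \<alpha>" "g \<alpha>"] rho_pos'[of \<alpha>] by (simp add: divide_right_mono)
    then show "(cmod ((f+g) \<alpha>))\<^sup>2 / rho m \<alpha> \<le> 2 * ((cmod (f \<alpha>))\<^sup>2 / rho m \<alpha>) + 2 * ((cmod (g \<alpha>))\<^sup>2 / rho m \<alpha>)"
      by (simp add: add_divide_distrib)
    show "0 \<le> (cmod ((f+g) \<alpha>))\<^sup>2 / rho m \<alpha>" using rho_pos'[of \<alpha>] by simp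
  qed
qed

lemma inH_smul: assumes "inH m f" shows "inH m (smul c f)"
proof -
  have "(\<lambda>\<alpha>. (cmod c)\<^sup>2 * ((cmod (f \<alpha>))\<^sup>2 / rho m \<alpha>)) summable_on UNIV"
    using assms unfolding inH_def by (intro summable_on_cmult_right)
  then show ?thesis unfolding inH_def smul_def by (simp add: norm_mult power_mult_distrib)
qed

lemma inH_zero: "inH m 0"
  unfolding inH_def by simp

lemma inH_uminus: assumes "inH m f" shows "inH m (- f)"
  using assms unfolding inH_def by simp

lemma inH_diff: assumes "inH m f" "inH m g" shows "inH m (f - g)"
  using inH_add[OF assms(1) inH_uminus[OF assms(2)]] by simp

lemma inH_sum: "finite I \<Longrightarrow> (\<And>i. i \<in> I \<Longrightarrow> inH m (f i)) \<Longrightarrow> inH m (\<Sum>i\<in>I. f i)"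
  by (induction I rule: finite_induct) (auto intro: inH_add inH_zero)

lemma inH_finite_supp: assumes "finite {\<alpha>. f \<alpha> \<noteq> 0}" shows "inH m f"
  unfolding inH_def by (rule finite_nonzero_values_imp_summable_on) (rule finite_subset[OF _ assms], auto)

lemma inH_poly: "is_poly p \<Longrightarrow> inH m p"
  unfolding is_poly_def by (rule inH_finite_supp)

lemma inH_emon: "inH m (emon \<beta>)"
  by (rule inH_finite_supp) (auto simp: emon_def)

lemma inner_summable: fixes f g :: "'n::finite coeffs" assumes "inH m f" "inH m g"
  shows "(\<lambda>\<alpha>. f \<alpha> * cnj (g \<alpha>) / complex_of_real (rho m \<alpha>)) summable_on UNIV"
proof -
  have s: "(\<lambda>\<alpha>. (cmod (f \<alpha>))\<^sup>2 / rho m \<alpha> + (cmod (g \<alpha>))\<^sup>2 / rho m \<alpha>) summable_on UNIV"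
    using assms unfolding inH_def by (intro summable_on_add)
  have "(\<lambda>\<alpha>. norm (f \<alpha> * cnj (g \<alpha>) / complex_of_real (rho m \<alpha>))) summable_on UNIV"
  proof (rule summable_on_comparison_test[OF s])
    fix \<alpha> :: "'n \<Rightarrow> nat"
    have r: "rho m \<alpha> > 0" by (rule rho_pos')
    have "norm (f \<alpha> * cnj (g \<alpha>) / complex_of_real (rho m \<alpha>)) = cmod (f \<alpha>) * cmod (g \<alpha>) / rho m \<alpha>"
      using r by (simp add: norm_mult norm_divide)
    also have "\<dots> \<le> ((cmod (f \<alpha>))\<^sup>2 + (cmod (g \<alpha>))\<^sup>2) / rho m \<alpha>"
    proof (rule divide_right_mono)
      have a: "2 * (cmod (f \<alpha>) * cmod (g \<alpha>)) \<le> 1 * (cmod (f \<alpha>))\<^sup>2 + (cmod (g \<alpha>))\<^sup>2 / 1"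
        by (rule amgm_t) simp
      have b: "0 \<le> cmod (f \<alpha>) * cmod (g \<alpha>)" by simp
      from a b show "cmod (f \<alpha>) * cmod (g \<alpha>) \<le> (cmod (f \<alpha>))\<^sup>2 + (cmod (g \<alpha>))\<^sup>2" by linarith
    qed (use r in simp)
    finally show "norm (f \<alpha> * cnj (g \<alpha>) / complex_of_real (rho m \<alpha>)) \<le> (cmod (f \<alpha>))\<^sup>2 / rho m \<alpha> + (cmod (g \<alpha>))\<^sup>2 / rho m \<alpha>"
      by (simp add: add_divide_distrib)
  qed simp
  then show ?thesis using summable_on_iff_abs_summable_on_complex by blast
qed

lemma innerH_cnj: "innerH m g f = cnj (innerH m f g)"
  unfolding innerH_def infsum_cnj[symmetric] by (simp add: mult.commute)

lemma innerH_add_left: assumes "inH m f" "inH m g" "inH m k"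
  shows "innerH m (f + g) k = innerH m f k + innerH m g k"
  unfolding innerH_def
  by (subst infsum_add[symmetric]) (auto intro!: inner_summable assms infsum_cong simp: add_divide_distrib distrib_right)

lemma innerH_add_right: assumes "inH m f" "inH m g" "inH m k"
  shows "innerH m k (f + g) = innerH m k f + innerH m k g"
  using innerH_add_left[OF assms] by (metis complex_cnj_add innerH_cnj)

lemma innerH_smul_left: "innerH m (smul c f) g = c * innerH m f g"
  unfolding innerH_def smul_def
  by (subst infsum_cmult_right'[symmetric]) (auto simp: mult.assoc)

lemma innerH_smul_right: "innerH m g (smul c f) = cnj c * innerH m g f"
  by (metis complex_cnj_cnj complex_cnj_mult innerH_cnj innerH_smul_left)

lemma innerH_zero_left: "innerH m 0 g = 0"
  unfolding innerH_def by simp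

lemma innerH_zero_right: "innerH m g 0 = 0"
  unfolding innerH_def by simp

lemma innerH_uminus_left: assumes "inH m f" shows "innerH m (- f) g = - innerH m f g"
proof -
  have "- f = smul (-1) f" by (simp add: smul_def fun_eq_iff)
  then show ?thesis using innerH_smul_left[of "-1" f g] by simp
qed

end

context fixes m :: nat assumes m1: "1 \<le> m"
begin

lemma sq_term_nonneg[simp]: "0 \<le> (cmod (f \<alpha>))\<^sup>2 / rho m \<alpha>"
  using rho_pos[OF m1, of \<alpha>] by simp

lemma innerH_diff_left: assumes "inH m f" "inH m g" "inH m k"
  shows "innerH m (f - g) k = innerH m f k - innerH m g k"
proof -
  have "f - g = f + (- g)" by simp
  then show ?thesis
    using innerH_add_left[OF m1 assms(1) inH_uminus[OF m1 assms(2)] assms(3)]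
      innerH_uminus_left[OF m1 assms(2), of k] by (simp only:) simp
qed

lemma innerH_diff_right: assumes "inH m f" "inH m g" "inH m k"
  shows "innerH m k (f - g) = innerH m k f - innerH m k g"
proof -
  have "innerH m k (f - g) = cnj (innerH m (f - g) k)" by (rule innerH_cnj[OF m1])
  also have "\<dots> = cnj (innerH m f k) - cnj (innerH m g k)" by (simp add: innerH_diff_left[OF assms])
  also have "\<dots> = innerH m k f - innerH m k g" by (simp add: innerH_cnj[OF m1, of k f] innerH_cnj[OF m1, of k g])
  finally show ?thesis .
qed

lemma innerH_sum_left: "finite I \<Longrightarrow> (\<And>i. i \<in> I \<Longrightarrow> inH m (f i)) \<Longrightarrow> inH m k \<Longrightarrow>
   innerH m (\<Sum>i\<in>I. f i) k = (\<Sum>i\<in>I. innerH m (f i) k)"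
  by (induction I rule: finite_induct)
     (auto simp: innerH_zero_left[OF m1] innerH_add_left[OF m1] inH_sum[OF m1])

lemma innerH_sum_right: "finite I \<Longrightarrow> (\<And>i. i \<in> I \<Longrightarrow> inH m (f i)) \<Longrightarrow> inH m k \<Longrightarrow>
   innerH m k (\<Sum>i\<in>I. f i) = (\<Sum>i\<in>I. innerH m k (f i))"
  by (induction I rule: finite_induct)
     (auto simp: innerH_zero_right[OF m1] innerH_add_right[OF m1] inH_sum[OF m1])

lemma innerH_self: assumes "inH m f" shows "innerH m f f = complex_of_real (nsq m f)"
proof -
  have "innerH m f f = (\<Sum>\<^sub>\<infinity>\<alpha>. complex_of_real ((cmod (f \<alpha>))\<^sup>2 / rho m \<alpha>))"
    unfolding innerH_def
    by (rule infsum_cong) (simp only: of_real_divide complex_norm_square)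
  also have "\<dots> = complex_of_real (nsq m f)"
    unfolding nsq_def
    by (rule infsumI, rule has_sum_of_real, rule has_sum_infsum) (use assms in \<open>simp add: inH_def\<close>)
  finally show ?thesis .
qed

lemma normH_nsq: assumes "inH m f" shows "normH m f = sqrt (nsq m f)"
  unfolding normH_def innerH_self[OF assms] by simp

lemma normH_nonneg: assumes "inH m f" shows "normH m f \<ge> 0"
  unfolding normH_nsq[OF assms] using nsq_nonneg[OF m1] by simp

lemma nsq_eq0: assumes "inH m f" "nsq m f = 0" shows "f = 0"
proof
  fix \<alpha>
  have "(cmod (f \<alpha>))\<^sup>2 / rho m \<alpha> = 0"
    by (rule nonneg_infsum_le_0D[where f="\<lambda>\<alpha>. (cmod (f \<alpha>))\<^sup>2 / rho m \<alpha>" and A=UNIV]) 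
       (use assms rho_pos[OF m1] in \<open>auto simp: nsq_def inH_def less_imp_le\<close>)
  then show "f \<alpha> = 0 \<alpha>" using rho_pos[OF m1, of \<alpha>] by simp
qed

lemma innerH_emon_right: "innerH m f (emon \<beta>) = f \<beta> / complex_of_real (rho m \<beta>)"
proof -
  have "innerH m f (emon \<beta>) = (\<Sum>\<^sub>\<infinity>\<alpha>\<in>{\<beta>}. f \<alpha> * cnj (emon \<beta> \<alpha>) / complex_of_real (rho m \<alpha>))"
    unfolding innerH_def by (rule infsum_cong_neutral) (auto simp: emon_def)
  then show ?thesis by (simp add: emon_def)
qed

lemma innerH_emon_left: "innerH m (emon \<beta>) f = cnj (f \<beta>) / complex_of_real (rho m \<beta>)"
  using innerH_emon_right[of f \<beta>] innerH_cnj[OF m1, of "emon \<beta>" f] by simp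

lemma term_le_nsq: assumes "inH m f" shows "(cmod (f \<beta>))\<^sup>2 / rho m \<beta> \<le> nsq m f"
proof -
  have "sum (\<lambda>\<alpha>. (cmod (f \<alpha>))\<^sup>2 / rho m \<alpha>) {\<beta>} \<le> nsq m f"
    unfolding nsq_def
    by (rule finite_sum_le_infsum) (use assms rho_pos[OF m1] in \<open>auto simp: inH_def less_imp_le\<close>)
  then show ?thesis by simp
qed

lemma coef_bound: assumes "inH m f" shows "cmod (f \<beta>) \<le> sqrt (rho m \<beta>) * normH m f"
proof -
  have r: "rho m \<beta> > 0" by (rule rho_pos[OF m1])
  have "(cmod (f \<beta>))\<^sup>2 \<le> rho m \<beta> * nsq m f"
    using term_le_nsq[OF assms, of \<beta>] r by (simp add: field_simps)
  then have "sqrt ((cmod (f \<beta>))\<^sup>2) \<le> sqrt (rho m \<beta> * nsq m f)"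
    using real_sqrt_le_mono by blast
  then show ?thesis by (simp add: normH_nsq[OF assms] real_sqrt_mult)
qed

lemma inner_bound_t: fixes f g :: "'n::finite coeffs" assumes "inH m f" "inH m g" "t > 0"
  shows "2 * cmod (innerH m f g) \<le> t * nsq m f + nsq m g / t"
proof -
  have abs: "(\<lambda>\<alpha>. norm (f \<alpha> * cnj (g \<alpha>) / complex_of_real (rho m \<alpha>))) summable_on UNIV"
    using summable_on_iff_abs_summable_on_complex[THEN iffD1, OF inner_summable[OF m1 assms(1,2)]] by simp
  have "cmod (innerH m f g) \<le> (\<Sum>\<^sub>\<infinity>\<alpha>. norm (f \<alpha> * cnj (g \<alpha>) / complex_of_real (rho m \<alpha>)))"
    unfolding innerH_def by (rule norm_infsum_bound[OF abs])
  also have "\<dots> \<le> (\<Sum>\<^sub>\<infinity>\<alpha>. (1/2) * (t * ((cmod (f \<alpha>))\<^sup>2 / rho m \<alpha>) + (1/t) * ((cmod (g \<alpha>))\<^sup>2 / rho m \<alpha>)))"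
  proof (rule infsum_mono)
    show "(\<lambda>\<alpha>. norm (f \<alpha> * cnj (g \<alpha>) / complex_of_real (rho m \<alpha>))) summable_on UNIV" using abs .
    show "(\<lambda>\<alpha>. (1/2) * (t * ((cmod (f \<alpha>))\<^sup>2 / rho m \<alpha>) + (1/t) * ((cmod (g \<alpha>))\<^sup>2 / rho m \<alpha>))) summable_on UNIV"
      using assms unfolding inH_def
      by (intro summable_on_add summable_on_cmult_right)
    fix \<alpha> :: "'n \<Rightarrow> nat"
    have r: "rho m \<alpha> > 0" by (rule rho_pos[OF m1])
    have a: "2 * (cmod (f \<alpha>) * cmod (g \<alpha>)) \<le> t * (cmod (f \<alpha>))\<^sup>2 + (cmod (g \<alpha>))\<^sup>2 / t"
      by (rule amgm_t[OF assms(3)])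
    have "norm (f \<alpha> * cnj (g \<alpha>) / complex_of_real (rho m \<alpha>)) = (cmod (f \<alpha>) * cmod (g \<alpha>)) / rho m \<alpha>"
      using r by (simp add: norm_mult norm_divide)
    also have "\<dots> \<le> ((t * (cmod (f \<alpha>))\<^sup>2 + (cmod (g \<alpha>))\<^sup>2 / t) / 2) / rho m \<alpha>"
      using a r by (intro divide_right_mono) auto
    also have "\<dots> = (1/2) * (t * ((cmod (f \<alpha>))\<^sup>2 / rho m \<alpha>) + (1/t) * ((cmod (g \<alpha>))\<^sup>2 / rho m \<alpha>))"
      using r assms(3) by (simp add: field_simps)
    finally show "norm (f \<alpha> * cnj (g \<alpha>) / complex_of_real (rho m \<alpha>)) \<le> (1/2) * (t * ((cmod (f \<alpha>))\<^sup>2 / rho m \<alpha>) + (1/t) * ((cmod (g \<alpha>))\<^sup>2 / rho m \<alpha>))" .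
  qed
  also have "\<dots> = (1/2) * (t * nsq m f + (1/t) * nsq m g)"
  proof -
    have s1: "(\<lambda>\<alpha>. t * ((cmod (f \<alpha>))\<^sup>2 / rho m \<alpha>)) summable_on UNIV"
      using assms(1) unfolding inH_def by (rule summable_on_cmult_right)
    have s2: "(\<lambda>\<alpha>. (1/t) * ((cmod (g \<alpha>))\<^sup>2 / rho m \<alpha>)) summable_on UNIV"
      using assms(2) unfolding inH_def by (rule summable_on_cmult_right)
    show ?thesis unfolding nsq_def
      by (simp only: infsum_cmult_right' infsum_add[OF s1 s2])
  qed
  finally show ?thesis by simp
qed

lemma CS: assumes "inH m f" "inH m g"
  shows "cmod (innerH m f g) \<le> normH m f * normH m g"
  unfolding normH_nsq[OF assms(1)] normH_nsq[OF assms(2)]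
  by (rule opt_t) (use inner_bound_t[OF assms] nsq_nonneg[OF m1] in auto)

lemma nsq_add: assumes "inH m f" "inH m g"
  shows "nsq m (f + g) = nsq m f + nsq m g + 2 * Re (innerH m f g)"
proof -
  have fg: "inH m (f+g)" using inH_add[OF m1 assms] .
  have "complex_of_real (nsq m (f+g)) = innerH m (f+g) (f+g)" using innerH_self[OF fg] by simp
  also have "\<dots> = innerH m f f + innerH m f g + (innerH m g f + innerH m g g)"
    using assms fg by (simp add: innerH_add_left[OF m1] innerH_add_right[OF m1])
  finally have "nsq m (f+g) = Re (innerH m f f + innerH m f g + (innerH m g f + innerH m g g))"
    by (metis Re_complex_of_real)
  then show ?thesis using assms by (simp add: innerH_self innerH_cnj[OF m1, of g f])
qed

lemma normH_add: assumes "inH m f" "inH m g"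
  shows "normH m (f + g) \<le> normH m f + normH m g"
proof -
  have "Re (innerH m f g) \<le> normH m f * normH m g"
    using CS[OF assms] complex_Re_le_cmod order_trans by blast
  then have "nsq m (f + g) \<le> (normH m f)\<^sup>2 + (normH m g)\<^sup>2 + 2 * (normH m f * normH m g)"
    using nsq_add[OF assms] normH_nsq[OF assms(1)] normH_nsq[OF assms(2)]
      real_sqrt_pow2[OF nsq_nonneg[OF m1, of f]] real_sqrt_pow2[OF nsq_nonneg[OF m1, of g]]
    by simp
  also have "\<dots> = (normH m f + normH m g)\<^sup>2" by (simp add: power2_eq_square algebra_simps)
  finally have "sqrt (nsq m (f + g)) \<le> sqrt ((normH m f + normH m g)\<^sup>2)"
    using real_sqrt_le_mono by blast
  then show ?thesis using normH_nsq[OF inH_add[OF m1 assms]] normH_nonneg[OF assms(1)] normH_nonneg[OF assms(2)] by simp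
qed

lemma normH_smul: assumes "inH m f" shows "normH m (smul c f) = cmod c * normH m f"
proof -
  have cc: "c * cnj c = complex_of_real ((cmod c)\<^sup>2)" by (rule complex_norm_square[symmetric])
  have "innerH m (smul c f) (smul c f) = (c * cnj c) * innerH m f f"
    by (simp add: innerH_smul_left[OF m1] innerH_smul_right[OF m1] mult.assoc)
  also have "\<dots> = complex_of_real ((cmod c)\<^sup>2 * nsq m f)"
    by (simp only: cc innerH_self[OF assms] of_real_mult)
  finally have "normH m (smul c f) = sqrt ((cmod c)\<^sup>2 * nsq m f)"
    unfolding normH_def by (simp only: Re_complex_of_real)
  then show ?thesis unfolding normH_nsq[OF assms] by (simp add: real_sqrt_mult)
qed

lemma normH_sum: "finite I \<Longrightarrow> (\<And>i. i \<in> I \<Longrightarrow> inH m (f i)) \<Longrightarrow>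
   normH m (\<Sum>i\<in>I. f i) \<le> (\<Sum>i\<in>I. normH m (f i))"
proof (induction I rule: finite_induct)
  case empty
  show ?case by (simp add: normH_def innerH_def)
next
  case (insert x F)
  have "normH m (\<Sum>i\<in>insert x F. f i) = normH m (f x + (\<Sum>i\<in>F. f i))" using insert by simp
  also have "\<dots> \<le> normH m (f x) + normH m (\<Sum>i\<in>F. f i)"
    using insert by (intro normH_add inH_sum[OF m1]) auto
  also have "\<dots> \<le> normH m (f x) + (\<Sum>i\<in>F. normH m (f i))" using insert by simp
  also have "\<dots> = (\<Sum>i\<in>insert x F. normH m (f i))" using insert by simp
  finally show ?case .
qed

lemma normH_diff_sym: assumes "inH m f" "inH m g" shows "normH m (f - g) = normH m (g - f)"
proof -
  have "g - f = smul (-1) (f - g)" by (simp add: smul_def fun_eq_iff)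
  then show ?thesis using normH_smul[OF inH_diff[OF m1 assms], of "-1"] by simp
qed

lemma separate: assumes "\<And>x. inH m x \<Longrightarrow> innerH m x u = innerH m x v" shows "u = v"
proof
  fix \<beta>
  have "cnj (u \<beta>) / complex_of_real (rho m \<beta>) = cnj (v \<beta>) / complex_of_real (rho m \<beta>)"
    using assms[OF inH_emon[OF m1, of \<beta>]] by (simp add: innerH_emon_left)
  then show "u \<beta> = v \<beta>" using rho_pos[OF m1, of \<beta>] by simp
qed

lemma innerH_poly_left: assumes "is_poly p"
  shows "innerH m p y = (\<Sum>\<alpha>\<in>{\<alpha>. p \<alpha> \<noteq> 0}. p \<alpha> * cnj (y \<alpha>) / complex_of_real (rho m \<alpha>))"
proof -
  have "innerH m p y = (\<Sum>\<^sub>\<infinity>\<alpha>\<in>{\<alpha>. p \<alpha> \<noteq> 0}. p \<alpha> * cnj (y \<alpha>) / complex_of_real (rho m \<alpha>))"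
    unfolding innerH_def by (rule infsum_cong_neutral) auto
  then show ?thesis using assms by (simp add: is_poly_def)
qed

end

definition Aop :: "nat \<Rightarrow> 'n \<Rightarrow> 'n::finite coeffs \<Rightarrow> 'n coeffs" where
  "Aop m i f = (\<lambda>\<alpha>. f (up i \<alpha>) * complex_of_real (real (Suc (\<alpha> i)) / real (m + mdeg \<alpha>)))"

lemma mult_z_up[simp]: "mult_z i f (up i \<alpha>) = f \<alpha>"
  unfolding mult_z_def up_def by simp

lemma mult_z_zero: "\<alpha> i = 0 \<Longrightarrow> mult_z i f \<alpha> = 0"
  unfolding mult_z_def by simp

lemma not_range_up: "\<alpha> \<notin> range (up i) \<Longrightarrow> \<alpha> i = 0"
  using up_down[of \<alpha> i] by (metis rangeI)

lemma hadj_char: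
  assumes "\<forall>y. inB y \<longrightarrow> inA (B0 y)"
    "\<forall>x y. inA x \<longrightarrow> inB y \<longrightarrow> ipB (A x) y = ipA x (B0 y)" "inB y"
  shows "inA (hadj inA ipA inB ipB A y) \<and> (\<forall>x. inA x \<longrightarrow> ipA x (hadj inA ipA inB ipB A y) = ipA x (B0 y))"
proof -
  let ?P = "\<lambda>B. (\<forall>y. inB y \<longrightarrow> inA (B y)) \<and> (\<forall>x y. inA x \<longrightarrow> inB y \<longrightarrow> ipB (A x) y = ipA x (B y))"
  have "?P B0" using assms(1,2) by blast
  have eq: "hadj inA ipA inB ipB A = (SOME B. ?P B)" by (simp add: hadj_def)
  have "?P (hadj inA ipA inB ipB A)" unfolding eq by (rule someI[of ?P B0]) fact
  then show ?thesis using assms by metis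
qed

context fixes m :: nat assumes m1: "1 \<le> m"
begin

lemma summable_mult_z: fixes f :: "'n::finite coeffs"
  assumes "inH m f"
  shows "inH m (mult_z i f)" "nsq m (mult_z i f) \<le> nsq m f"
proof -
  let ?phi = "\<lambda>\<alpha>. (cmod (mult_z i f \<alpha>))\<^sup>2 / rho m \<alpha>"
  let ?psi = "\<lambda>\<alpha>. (cmod (f \<alpha>))\<^sup>2 / rho m \<alpha>"
  have inj: "inj (up i)" by (meson injI up_inj)
  have c: "(?phi \<circ> up i) \<alpha> \<le> ?psi \<alpha>" for \<alpha>
    using rho_le_up[OF m1, of \<alpha> i] rho_pos[OF m1, of \<alpha>]
    by (auto intro!: divide_left_mono)
  have s1: "(?phi \<circ> up i) summable_on UNIV"
    by (rule summable_on_comparison_test[OF inH_summable[OF m1 assms]]) (use c sq_term_nonneg[OF m1] in auto)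
  have e1: "(\<Sum>\<^sub>\<infinity>\<alpha>. ?phi \<alpha>) = (\<Sum>\<^sub>\<infinity>\<alpha>\<in>range (up i). ?phi \<alpha>)"
    by (rule infsum_cong_neutral) (auto dest: not_range_up simp: mult_z_zero)
  have "?phi summable_on range (up i)" using s1 summable_on_reindex[OF inj] by blast
  then show "inH m (mult_z i f)" unfolding inH_def
    by (subst summable_on_cong_neutral[where T="range (up i)"]) (auto dest: not_range_up simp: mult_z_zero)
  have "nsq m (mult_z i f) = (\<Sum>\<^sub>\<infinity>\<alpha>. (?phi \<circ> up i) \<alpha>)"
    unfolding nsq_def e1 by (rule infsum_reindex[OF inj])
  also have "\<dots> \<le> (\<Sum>\<^sub>\<infinity>\<alpha>. ?psi \<alpha>)"
    by (rule infsum_mono[OF s1 inH_summable[OF m1 assms]]) (use c in auto)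
  finally show "nsq m (mult_z i f) \<le> nsq m f" unfolding nsq_def .
qed

lemma Aop_term: fixes g :: "'n::finite coeffs"
  shows "(cmod (Aop m i g \<alpha>))\<^sup>2 / rho m \<alpha> =
   (cmod (g (up i \<alpha>)))\<^sup>2 / rho m (up i \<alpha>) * (real (Suc (\<alpha> i)) / real (m + mdeg \<alpha>))"
proof -
  have p: "real (m + mdeg \<alpha>) > 0" using m1 by simp
  have r: "rho m \<alpha> > 0" by (rule rho_pos[OF m1])
  have c: "cmod (Aop m i g \<alpha>) = cmod (g (up i \<alpha>)) * (real (Suc (\<alpha> i)) / real (m + mdeg \<alpha>))"
    unfolding Aop_def by (simp only: norm_mult norm_of_real) simp
  show ?thesis
    unfolding c rho_step[OF m1] using r p
    by (simp add: power_mult_distrib power2_eq_square field_simps del: of_nat_Suc of_nat_add)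
qed

lemma summable_Aop: fixes f :: "'n::finite coeffs"
  assumes "inH m f"
  shows "inH m (Aop m i f)" "nsq m (Aop m i f) \<le> nsq m f"
proof -
  let ?phi = "\<lambda>\<alpha>. (cmod (Aop m i f \<alpha>))\<^sup>2 / rho m \<alpha>"
  let ?psi = "\<lambda>\<alpha>. (cmod (f \<alpha>))\<^sup>2 / rho m \<alpha>"
  have inj: "inj (up i)" by (meson injI up_inj)
  have c: "?phi \<alpha> \<le> (?psi \<circ> up i) \<alpha>" for \<alpha>
  proof -
    have "real (Suc (\<alpha> i)) / real (m + mdeg \<alpha>) \<le> 1" using le_mdeg[of \<alpha> i] m1 by simp
    then show ?thesis unfolding Aop_term o_def
      by (intro mult_left_le) (auto intro: sq_term_nonneg[OF m1])
  qed
  have s0: "?psi summable_on range (up i)"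
    by (rule summable_on_subset[OF inH_summable[OF m1 assms]]) auto
  have s1: "(?psi \<circ> up i) summable_on UNIV" using s0 summable_on_reindex[OF inj] by blast
  show "inH m (Aop m i f)" unfolding inH_def
    by (rule summable_on_comparison_test[OF s1]) (use c sq_term_nonneg[OF m1] in auto)
  then have "nsq m (Aop m i f) \<le> (\<Sum>\<^sub>\<infinity>\<alpha>. (?psi \<circ> up i) \<alpha>)"
    unfolding nsq_def inH_def by (rule infsum_mono[OF _ s1]) (use c in auto)
  also have "\<dots> = (\<Sum>\<^sub>\<infinity>\<alpha>\<in>range (up i). ?psi \<alpha>)"
    by (rule infsum_reindex[OF inj, symmetric])
  also have "\<dots> \<le> (\<Sum>\<^sub>\<infinity>\<alpha>. ?psi \<alpha>)"
    by (rule infsum_mono2[OF s0 inH_summable[OF m1 assms]]) (auto intro: sq_term_nonneg[OF m1])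
  finally show "nsq m (Aop m i f) \<le> nsq m f" unfolding nsq_def .
qed

lemma inH_mult_z: "inH m f \<Longrightarrow> inH m (mult_z i f)" using summable_mult_z(1) .
lemma inH_Aop: "inH m f \<Longrightarrow> inH m (Aop m i f)" using summable_Aop(1) .

lemma normH_mult_z: assumes "inH m f" shows "normH m (mult_z i f) \<le> normH m f"
  using summable_mult_z[OF assms] assms by (simp add: normH_nsq[OF m1])

lemma normH_Aop: assumes "inH m f" shows "normH m (Aop m i f) \<le> normH m f"
  using summable_Aop[OF assms] assms by (simp add: normH_nsq[OF m1])

lemma adj_mult_z: fixes f g :: "'n::finite coeffs"
  shows "innerH m (mult_z i f) g = innerH m f (Aop m i g)"
proof -
  have inj: "inj (up i)" by (meson injI up_inj)
  let ?phi = "\<lambda>\<alpha>. mult_z i f \<alpha> * cnj (g \<alpha>) / complex_of_real (rho m \<alpha>)"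
  have "innerH m (mult_z i f) g = (\<Sum>\<^sub>\<infinity>\<alpha>\<in>range (up i). ?phi \<alpha>)"
    unfolding innerH_def by (rule infsum_cong_neutral) (auto dest: not_range_up simp: mult_z_zero)
  also have "\<dots> = (\<Sum>\<^sub>\<infinity>\<alpha>. (?phi \<circ> up i) \<alpha>)" by (rule infsum_reindex[OF inj])
  also have "\<dots> = innerH m f (Aop m i g)"
    unfolding innerH_def
  proof (rule infsum_cong)
    fix \<alpha> :: "'n \<Rightarrow> nat"
    have p: "real (m + mdeg \<alpha>) > 0" using m1 by simp
    show "(?phi \<circ> up i) \<alpha> = f \<alpha> * cnj (Aop m i g \<alpha>) / complex_of_real (rho m \<alpha>)"
      unfolding Aop_def o_def rho_step[OF m1] using rho_pos[OF m1, of \<alpha>] p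
      by (simp add: field_simps del: of_nat_Suc)
  qed
  finally show ?thesis .
qed

lemma hadj_mult_z: assumes "inH m g"
  shows "hadj (inH m) (innerH m) (inH m) (innerH m) (mult_z i) g = Aop m i g"
proof -
  have h: "inH m (hadj (inH m) (innerH m) (inH m) (innerH m) (mult_z i) g) \<and>
    (\<forall>x. inH m x \<longrightarrow> innerH m x (hadj (inH m) (innerH m) (inH m) (innerH m) (mult_z i) g) = innerH m x (Aop m i g))"
    by (rule hadj_char) (use assms inH_Aop adj_mult_z in auto)
  show ?thesis by (rule separate[OF m1]) (use h in auto)
qed

lemma inH_Mz: assumes "inHn m F" shows "inH m (Mz F)"
  using assms unfolding Mz_def inHn_def by (intro inH_sum[OF m1] inH_mult_z) auto

lemma innerHn_single: "innerHn m (\<lambda>j. if j = i then f else 0) U = innerH m f (U i)"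
proof -
  have "innerHn m (\<lambda>j. if j = i then f else 0) U = (\<Sum>j\<in>UNIV. if j = i then innerH m f (U j) else 0)"
    unfolding innerHn_def by (rule sum.cong) (auto simp: innerH_zero_left[OF m1])
  then show ?thesis by simp
qed

lemma separateHn: fixes U V :: "'n::finite \<Rightarrow> 'n coeffs" assumes "\<And>X. inHn m X \<Longrightarrow> innerHn m X U = innerHn m X V" shows "U = V"
proof
  fix i
  show "U i = V i"
  proof (rule separate[OF m1])
    fix x :: "'n coeffs" assume x: "inH m x"
    have "inHn m (\<lambda>j. if j = i then x else 0)" using x inH_zero[OF m1] by (auto simp: inHn_def)
    then show "innerH m x (U i) = innerH m x (V i)" using assms innerHn_single by metis
  qed
qed

lemma adj_Mz: assumes "inHn m F" "inH m g"
  shows "innerH m (Mz F) g = innerHn m F (\<lambda>i. Aop m i g)"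
  using assms unfolding Mz_def innerHn_def inHn_def
  by (subst innerH_sum_left[OF m1]) (auto intro: inH_mult_z simp: adj_mult_z)

lemma Mz_adj_eq: assumes "inH m g" shows "Mz_adj m g = (\<lambda>i. Aop m i g)"
proof -
  have h: "inHn m (Mz_adj m g) \<and> (\<forall>X. inHn m X \<longrightarrow> innerHn m X (Mz_adj m g) = innerHn m X (\<lambda>i. Aop m i g))"
    unfolding Mz_adj_def
    by (rule hadj_char) (use assms inH_Aop adj_Mz in \<open>auto simp: inHn_def\<close>)
  show ?thesis by (rule separateHn) (use h in auto)
qed

definition dl :: "nat \<Rightarrow> real" where
  "dl k = (if k = 0 then 1 else real (m + k - 1) / real k)"

lemma delta_eq: "delta m f = (\<lambda>\<alpha>. complex_of_real (dl (mdeg \<alpha>)) * f \<alpha>)"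
  unfolding delta_def dl_def by (auto simp: fun_eq_iff)

lemma dl_bounds: "0 < dl k" "dl k \<le> real m"
proof -
  show "0 < dl k" unfolding dl_def using m1 by auto
  show "dl k \<le> real m"
  proof (cases "k = 0")
    case True then show ?thesis using m1 by (simp add: dl_def)
  next
    case False
    have e1: "real (m + k - 1) = real m + real k - 1" using m1 by (simp add: of_nat_diff)
    have e2: "real m * real k - (real m + real k - 1) = (real m - 1) * (real k - 1)" by (simp add: algebra_simps)
    have e3: "(real m - 1) * (real k - 1) \<ge> 0" using m1 False by simp
    have "real (m + k - 1) \<le> real m * real k" using e1 e2 e3 by linarith
    then show ?thesis using False by (simp add: dl_def field_simps)
  qed
qed

lemma inH_delta: assumes "inH m f" shows "inH m (delta m f)"
proof -
  have s: "(\<lambda>\<alpha>. (real m)\<^sup>2 * ((cmod (f \<alpha>))\<^sup>2 / rho m \<alpha>)) summable_on UNIV"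
    using assms unfolding inH_def by (rule summable_on_cmult_right)
  show ?thesis unfolding inH_def
  proof (rule summable_on_comparison_test[OF s])
    fix \<alpha> :: "'a \<Rightarrow> nat"
    have "(cmod (delta m f \<alpha>))\<^sup>2 = (dl (mdeg \<alpha>))\<^sup>2 * (cmod (f \<alpha>))\<^sup>2"
      unfolding delta_eq using dl_bounds(1)[of "mdeg \<alpha>"] by (simp add: norm_mult power_mult_distrib)
    also have "\<dots> \<le> (real m)\<^sup>2 * (cmod (f \<alpha>))\<^sup>2"
      using dl_bounds[of "mdeg \<alpha>"] by (intro mult_right_mono power_mono) auto
    finally show "(cmod (delta m f \<alpha>))\<^sup>2 / rho m \<alpha> \<le> (real m)\<^sup>2 * ((cmod (f \<alpha>))\<^sup>2 / rho m \<alpha>)"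
      using rho_pos[OF m1, of \<alpha>] by (simp add: divide_right_mono)
  qed (rule sq_term_nonneg[OF m1])
qed

lemma delta_sym: "innerH m (delta m f) g = innerH m f (delta m g)"
  unfolding innerH_def delta_eq by (rule infsum_cong) simp

lemma Mz'_adj_eq: assumes "inH m g" shows "Mz'_adj m g = (\<lambda>i. Aop m i (delta m g))"
proof -
  have h: "inHn m (Mz'_adj m g) \<and> (\<forall>X. inHn m X \<longrightarrow> innerHn m X (Mz'_adj m g) = innerHn m X (\<lambda>i. Aop m i (delta m g)))"
    unfolding Mz'_adj_def Mz'_def
  proof (rule hadj_char)
    show "\<forall>x y. inHn m x \<longrightarrow> inH m y \<longrightarrow> innerH m (delta m (Mz x)) y = innerHn m x (\<lambda>i. Aop m i (delta m y))"
      using adj_Mz inH_delta delta_sym by metis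
  qed (use assms inH_Aop inH_delta in \<open>auto simp: inHn_def\<close>)
  show ?thesis by (rule separateHn) (use h in auto)
qed

lemma inH_Mz': "inHn m F \<Longrightarrow> inH m (Mz' m F)"
  unfolding Mz'_def by (intro inH_delta inH_Mz)

end

lemma Mz_at0: "Mz F (0::'n::finite \<Rightarrow> nat) = 0"
  unfolding Mz_def by (simp add: fun_sum_apply mult_z_zero)

lemma mult_z_diff: "mult_z i (f - g) = mult_z i f - mult_z i g"
  unfolding mult_z_def by (auto simp: fun_eq_iff)

lemma mult_z_add: "mult_z i (f + g) = mult_z i f + mult_z i g"
  unfolding mult_z_def by (auto simp: fun_eq_iff)

lemma mult_z_smul: "mult_z i (smul c f) = smul c (mult_z i f)"
  unfolding mult_z_def smul_def by (auto simp: fun_eq_iff)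

lemma mult_z_sum: "mult_z i (\<Sum>j\<in>J. f j) = (\<Sum>j\<in>J. mult_z i (f j))"
  unfolding mult_z_def by (auto simp: fun_eq_iff fun_sum_apply)

lemma mult_z_0: "mult_z i 0 = 0"
  unfolding mult_z_def by (auto simp: fun_eq_iff)

lemma Mz_diff: "Mz (F - G) = Mz F - Mz G"
  unfolding Mz_def by (simp add: mult_z_diff sum_subtractf)

context fixes m :: nat assumes m1: "1 \<le> m"
begin

lemma mult_z_Aop_c:
  fixes v :: "'n::finite coeffs"
  shows "mult_z i (\<lambda>\<beta>. complex_of_real (c (mdeg \<beta>)) * Aop m i v \<beta>) \<alpha> =
    complex_of_real (c (mdeg \<alpha> - 1)) * v \<alpha> * complex_of_real (real (\<alpha> i) / real (m + mdeg \<alpha> - 1))"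
proof (cases "\<alpha> i = 0")
  case True
  then show ?thesis by (simp add: mult_z_zero)
next
  case False
  define \<beta> where "\<beta> = \<alpha>(i := \<alpha> i - 1)"
  have ub: "up i \<beta> = \<alpha>" unfolding \<beta>_def using up_down[of \<alpha> i, OF False] .
  have md: "mdeg \<beta> = mdeg \<alpha> - 1" using mdeg_up[of i \<beta>] ub by simp
  have bi: "Suc (\<beta> i) = \<alpha> i" using False unfolding \<beta>_def by simp
  have mb: "m + mdeg \<beta> = m + mdeg \<alpha> - 1" using md m1 mdeg_up[of i \<beta>] ub by simp
  have "mult_z i (\<lambda>\<beta>. complex_of_real (c (mdeg \<beta>)) * Aop m i v \<beta>) \<alpha> =
      complex_of_real (c (mdeg \<beta>)) * Aop m i v \<beta>"
    unfolding mult_z_def \<beta>_def using False by simp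
  also have "\<dots> = complex_of_real (c (mdeg \<alpha> - 1)) * v \<alpha> * complex_of_real (real (\<alpha> i) / real (m + mdeg \<alpha> - 1))"
    unfolding Aop_def ub md[symmetric] mb[symmetric] bi by simp
  finally show ?thesis .
qed

lemma Mz_Aop_c:
  fixes v :: "'n::finite coeffs"
  shows "Mz (\<lambda>i. (\<lambda>\<beta>. complex_of_real (c (mdeg \<beta>)) * Aop m i v \<beta>)) \<alpha> =
    complex_of_real (c (mdeg \<alpha> - 1)) * v \<alpha> * complex_of_real (real (mdeg \<alpha>) / real (m + mdeg \<alpha> - 1))"
proof -
  have "Mz (\<lambda>i. (\<lambda>\<beta>. complex_of_real (c (mdeg \<beta>)) * Aop m i v \<beta>)) \<alpha> =
     (\<Sum>i\<in>UNIV. complex_of_real (c (mdeg \<alpha> - 1)) * v \<alpha> * complex_of_real (real (\<alpha> i) / real (m + mdeg \<alpha> - 1)))"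
    unfolding Mz_def fun_sum_apply by (simp add: mult_z_Aop_c)
  also have "\<dots> = complex_of_real (c (mdeg \<alpha> - 1)) * v \<alpha> * complex_of_real (\<Sum>i\<in>UNIV. real (\<alpha> i) / real (m + mdeg \<alpha> - 1))"
    by (simp add: sum_distrib_left)
  also have "(\<Sum>i\<in>UNIV. real (\<alpha> i) / real (m + mdeg \<alpha> - 1)) = real (mdeg \<alpha>) / real (m + mdeg \<alpha> - 1)"
    unfolding mdeg_def by (simp add: sum_divide_distrib)
  finally show ?thesis .
qed

lemma Mz_Aop: fixes v :: "'n::finite coeffs"
  shows "Mz (\<lambda>i. Aop m i v) \<alpha> = v \<alpha> * complex_of_real (real (mdeg \<alpha>) / real (m + mdeg \<alpha> - 1))"
  using Mz_Aop_c[of "\<lambda>_. 1" v \<alpha>] by simp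

lemma MzA_delta: fixes u :: "'n::finite coeffs" assumes "u 0 = 0"
  shows "Mz (\<lambda>i. Aop m i (delta m u)) = u"
proof
  fix \<alpha> :: "'n \<Rightarrow> nat"
  show "Mz (\<lambda>i. Aop m i (delta m u)) \<alpha> = u \<alpha>"
  proof (cases "mdeg \<alpha> = 0")
    case True
    then have "\<alpha> = 0" using mdeg_eq_0_iff by blast
    then show ?thesis using assms True by (simp add: Mz_Aop)
  next
    case False
    have p: "real (m + mdeg \<alpha> - 1) > 0" using m1 False by simp
    have "Mz (\<lambda>i. Aop m i (delta m u)) \<alpha> =
       u \<alpha> * complex_of_real (dl m (mdeg \<alpha>) * (real (mdeg \<alpha>) / real (m + mdeg \<alpha> - 1)))"
      by (simp add: Mz_Aop delta_eq[OF m1] mult_ac)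
    also have "dl m (mdeg \<alpha>) * (real (mdeg \<alpha>) / real (m + mdeg \<alpha> - 1)) = 1"
      using False p by (simp add: dl_def[OF m1] of_nat_diff)
    finally show ?thesis by simp
  qed
qed

lemma innerHn_diff_left: assumes "inHn m F" "inHn m G" "inHn m X"
  shows "innerHn m (F - G) X = innerHn m F X - innerHn m G X"
  using assms unfolding innerHn_def inHn_def
  by (simp add: innerH_diff_left[OF m1] sum_subtractf)

lemma innerHn_diff_right: assumes "inHn m F" "inHn m G" "inHn m X"
  shows "innerHn m X (F - G) = innerHn m X F - innerHn m X G"
  using assms unfolding innerHn_def inHn_def
  by (simp add: innerH_diff_right[OF m1] sum_subtractf)

lemma inHn_diff: "inHn m F \<Longrightarrow> inHn m G \<Longrightarrow> inHn m (F - G)"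
  unfolding inHn_def by (simp add: inH_diff[OF m1])

lemma innerHn_self: assumes "inHn m F"
  shows "innerHn m F F = complex_of_real (\<Sum>i\<in>UNIV. nsq m (F i))"
proof -
  have "\<And>i. innerH m (F i) (F i) = complex_of_real (nsq m (F i))"
    using assms innerH_self[OF m1] unfolding inHn_def by blast
  then show ?thesis unfolding innerHn_def by (simp add: of_real_sum)
qed

lemma innerHn_self0: assumes "inHn m F" "innerHn m F F = 0" shows "F = 0"
proof
  fix i
  from assms(2) have "complex_of_real (\<Sum>i\<in>UNIV. nsq m (F i)) = 0"
    unfolding innerHn_self[OF assms(1)] .
  then have s0: "(\<Sum>i\<in>UNIV. nsq m (F i)) = 0" by (simp only: of_real_eq_0_iff)
  have le: "nsq m (F i) \<le> (\<Sum>j\<in>UNIV. nsq m (F j))"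
    by (rule member_le_sum) (auto intro: nsq_nonneg[OF m1])
  have ge: "0 \<le> nsq m (F i)" by (rule nsq_nonneg[OF m1])
  have "nsq m (F i) = 0" using le ge s0 by linarith
  moreover have "inH m (F i)" using assms(1) unfolding inHn_def by simp
  ultimately have "F i = 0" using nsq_eq0[OF m1, of "F i"] by blast
  then show "F i = 0 i" by simp
qed

lemma normH_le_normHn: assumes "inHn m D" shows "normH m (D i) \<le> normHn m D"
proof -
  have "nsq m (D i) \<le> (\<Sum>j\<in>UNIV. nsq m (D j))"
    by (rule member_le_sum) (auto intro: nsq_nonneg[OF m1])
  then show ?thesis using assms unfolding normHn_def innerHn_self[OF assms] inHn_def
    by (simp add: normH_nsq[OF m1])
qed

lemma innerHn_bound: assumes "inHn m W" "inHn m D"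
  shows "cmod (innerHn m W D) \<le> (\<Sum>i\<in>UNIV. normH m (W i)) * normHn m D"
proof -
  have "cmod (innerHn m W D) \<le> (\<Sum>i\<in>UNIV. cmod (innerH m (W i) (D i)))"
    unfolding innerHn_def by (rule norm_sum)
  also have "\<dots> \<le> (\<Sum>i\<in>UNIV. normH m (W i) * normHn m D)"
  proof (rule sum_mono)
    fix i
    have "cmod (innerH m (W i) (D i)) \<le> normH m (W i) * normH m (D i)"
      using assms unfolding inHn_def by (intro CS[OF m1]) auto
    also have "\<dots> \<le> normH m (W i) * normHn m D"
      using assms normH_le_normHn[OF assms(2)] normH_nonneg[OF m1] unfolding inHn_def
      by (intro mult_left_mono) auto
    finally show "cmod (innerH m (W i) (D i)) \<le> normH m (W i) * normHn m D" .
  qed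
  also have "\<dots> = (\<Sum>i\<in>UNIV. normH m (W i)) * normHn m D" by (simp add: sum_distrib_right)
  finally show ?thesis .
qed

lemma small_imp_0: fixes x K :: real assumes "K \<ge> 0" "\<And>e. e > 0 \<Longrightarrow> x \<le> K * e" shows "x \<le> 0"
proof (rule ccontr)
  assume "\<not> x \<le> 0"
  then have xp: "x > 0" by simp
  have "x \<le> K * (x / (K+1))" using assms(2)[of "x/(K+1)"] xp assms(1) by simp
  also have "\<dots> = x * (K / (K+1))" by simp
  also have "\<dots> < x * 1" using xp assms(1) by (intro mult_strict_left_mono) auto
  finally show False by simp
qed

lemma P_Im_eq: fixes F :: "'n::finite \<Rightarrow> 'n coeffs" assumes F: "inHn m F"
  shows "P_Im m F = (\<lambda>i. Aop m i (delta m (Mz F)))"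
proof -
  define y0 where "y0 = (\<lambda>i. Aop m i (delta m (Mz F)))"
  define S :: "('n \<Rightarrow> 'n coeffs) set" where "S = range_Mz_adj m"
  have u: "inH m (delta m (Mz F))" by (intro inH_delta[OF m1] inH_Mz[OF m1] F)
  have y0H: "inHn m y0" unfolding y0_def inHn_def using u by (simp add: inH_Aop[OF m1])
  have MA: "Mz_adj m (delta m (Mz F)) = y0" unfolding y0_def by (rule Mz_adj_eq[OF m1 u])
  have n0: "normHn m (y0 - y0) = 0" by (simp add: normHn_def innerHn_def innerH_def)
  have y0S: "y0 \<in> S" unfolding S_def range_Mz_adj_def using y0H u MA n0 by auto
  have SH: "s \<in> S \<Longrightarrow> inHn m s" for s unfolding S_def range_Mz_adj_def by auto
  have MzW: "Mz (F - y0) = 0"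
  proof -
    have "Mz y0 = Mz F" unfolding y0_def
      by (rule MzA_delta) (rule Mz_at0)
    then show ?thesis by (simp add: Mz_diff)
  qed
  have WH: "inHn m (F - y0)" by (rule inHn_diff[OF F y0H])
  have orth: "innerHn m (F - y0) s = 0" if s: "s \<in> S" for s
  proof -
    have K: "(\<Sum>i\<in>UNIV. normH m ((F - y0) i)) \<ge> 0"
      using WH by (intro sum_nonneg) (auto simp: inHn_def normH_nonneg[OF m1])
    have "cmod (innerHn m (F - y0) s) \<le> (\<Sum>i\<in>UNIV. normH m ((F - y0) i)) * e" if e: "e > 0" for e
    proof -
      obtain f where f: "inH m f" "normHn m (s - Mz_adj m f) < e"
        using s e unfolding S_def range_Mz_adj_def by blast
      have MAf: "Mz_adj m f = (\<lambda>i. Aop m i f)" by (rule Mz_adj_eq[OF m1 f(1)])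
      have MfH: "inHn m (Mz_adj m f)" unfolding MAf inHn_def using f(1) by (simp add: inH_Aop[OF m1])
      have z: "innerHn m (F - y0) (Mz_adj m f) = 0"
        unfolding MAf using adj_Mz[OF m1 WH f(1)] MzW by (simp add: innerH_zero_left[OF m1])
      have "innerHn m (F - y0) s = innerHn m (F - y0) (s - Mz_adj m f)"
        using innerHn_diff_right[OF SH[OF s] MfH WH] z by simp
      then have "cmod (innerHn m (F - y0) s) \<le> (\<Sum>i\<in>UNIV. normH m ((F - y0) i)) * normHn m (s - Mz_adj m f)"
        using innerHn_bound[OF WH inHn_diff[OF SH[OF s] MfH]] by simp
      also have "\<dots> \<le> (\<Sum>i\<in>UNIV. normH m ((F - y0) i)) * e"
        using K f(2) by (intro mult_left_mono) auto
      finally show ?thesis .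
    qed
    then have "cmod (innerHn m (F - y0) s) \<le> 0" by (intro small_imp_0[OF K]) auto
    then show ?thesis by simp
  qed
  have "P_Im m F = y0"
    unfolding P_Im_def orth_proj_def S_def[symmetric]
  proof (rule the_equality)
    show "y0 \<in> S \<and> (\<forall>s\<in>S. innerHn m (F - y0) s = 0)" using y0S orth by blast
    fix y assume y: "y \<in> S \<and> (\<forall>s\<in>S. innerHn m (F - y) s = 0)"
    have yH: "inHn m y" using y SH by blast
    have dz: "innerHn m (y0 - y) z = 0" if z: "z \<in> S" for z
    proof -
      have "y0 - y = (F - y) - (F - y0)" by (simp add: fun_eq_iff)
      then have "innerHn m (y0 - y) z = innerHn m (F - y) z - innerHn m (F - y0) z"
        using innerHn_diff_left[OF inHn_diff[OF F yH] WH SH[OF z]] by simp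
      then show ?thesis using y orth z by simp
    qed
    have "innerHn m (y0 - y) (y0 - y) = innerHn m (y0 - y) y0 - innerHn m (y0 - y) y"
      by (rule innerHn_diff_right[OF y0H yH inHn_diff[OF y0H yH]])
    also have "\<dots> = 0" using dz[OF y0S] dz y by simp
    finally have "y0 - y = 0" by (intro innerHn_self0 inHn_diff[OF y0H yH])
    then show "y = y0" by (simp add: fun_eq_iff)
  qed
  then show ?thesis unfolding y0_def .
qed

end

lemma Aop_add: "Aop m i (f + g) = Aop m i f + Aop m i g"
  unfolding Aop_def by (rule ext) (simp only: plus_fun_apply distrib_right)

lemma Aop_smul: "Aop m i (smul c f) = smul c (Aop m i f)"
  unfolding Aop_def smul_def by (rule ext) (simp only: mult.assoc)

lemma Aop_diff: "Aop m i (f - g) = Aop m i f - Aop m i g"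
  unfolding Aop_def by (rule ext) (simp only: minus_apply left_diff_distrib)

lemma smul_sum: "smul c (\<Sum>i\<in>I. f i) = (\<Sum>i\<in>I. smul c (f i))"
  unfolding smul_def by (auto simp: fun_eq_iff fun_sum_apply sum_distrib_left)

lemma smul_add: "smul c (f + g) = smul c f + smul c g"
  unfolding smul_def by (auto simp: fun_eq_iff algebra_simps)

context fixes m :: nat assumes m1: "1 \<le> m"
begin

lemma bdd_inH: "bdd_op m X \<Longrightarrow> inH m f \<Longrightarrow> inH m (X f)"
  unfolding bdd_op_def by blast

lemma bdd_add: "bdd_op m X \<Longrightarrow> inH m f \<Longrightarrow> inH m g \<Longrightarrow> X (f + g) = X f + X g"
  unfolding bdd_op_def by blast

lemma bdd_smul: "bdd_op m X \<Longrightarrow> inH m f \<Longrightarrow> X (smul c f) = smul c (X f)"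
  unfolding bdd_op_def by blast

lemma bdd_diff: assumes "bdd_op m X" "inH m f" "inH m g" shows "X (f - g) = X f - X g"
proof -
  have "X f = X ((f - g) + g)" by simp
  also have "\<dots> = X (f - g) + X g" by (rule bdd_add[OF assms(1) inH_diff[OF m1 assms(2,3)] assms(3)])
  finally show ?thesis by simp
qed

lemma bdd_bound: assumes "bdd_op m X" obtains C where "C \<ge> 0" "\<And>f. inH m f \<Longrightarrow> normH m (X f) \<le> C * normH m f"
proof -
  obtain C where C: "\<And>f. inH m f \<Longrightarrow> normH m (X f) \<le> C * normH m f" using assms unfolding bdd_op_def by blast
  have "normH m (X f) \<le> max C 0 * normH m f" if "inH m f" for f
    using C[OF that] normH_nonneg[OF m1 that] by (smt (verit, best) mult_right_mono)
  then show ?thesis using that[of "max C 0"] by auto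
qed

lemma sigma_eq: assumes "inH m f"
  shows "sigma_Mz m X f = (\<Sum>i\<in>UNIV. mult_z i (X (Aop m i f)))"
  unfolding sigma_Mz_def using hadj_mult_z[OF m1 assms] by simp

lemma bdd_sigma: fixes X :: "'n::finite coeffs \<Rightarrow> 'n coeffs" assumes X: "bdd_op m X" shows "bdd_op m (sigma_Mz m X)"
  unfolding bdd_op_def
proof (intro conjI allI impI)
  fix f :: "'n coeffs" assume f: "inH m f"
  show "inH m (sigma_Mz m X f)" unfolding sigma_eq[OF f]
    by (intro inH_sum[OF m1] inH_mult_z[OF m1] bdd_inH[OF X] inH_Aop[OF m1] f) auto
next
  fix f g :: "'n coeffs" assume f: "inH m f" and g: "inH m g"
  show "sigma_Mz m X (f + g) = sigma_Mz m X f + sigma_Mz m X g"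
    unfolding sigma_eq[OF f] sigma_eq[OF g] sigma_eq[OF inH_add[OF m1 f g]] Aop_add
    by (simp add: bdd_add[OF X] inH_Aop[OF m1] f g mult_z_add sum.distrib)
next
  fix c and f :: "'n coeffs" assume f: "inH m f"
  show "sigma_Mz m X (smul c f) = smul c (sigma_Mz m X f)"
    unfolding sigma_eq[OF f] sigma_eq[OF inH_smul[OF m1 f]] Aop_smul
    by (simp add: bdd_smul[OF X] inH_Aop[OF m1] f mult_z_smul smul_sum)
next
  obtain C where C: "C \<ge> 0" "\<And>f. inH m f \<Longrightarrow> normH m (X f) \<le> C * normH m f"
    using bdd_bound[OF X] by blast
  show "\<exists>C. \<forall>f::'n coeffs. inH m f \<longrightarrow> normH m (sigma_Mz m X f) \<le> C * normH m f"
  proof (intro exI allI impI)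
    fix f :: "'n coeffs" assume f: "inH m f"
    have h: "\<And>i. inH m (X (Aop m i f))" using bdd_inH[OF X] inH_Aop[OF m1 f] by blast
    have "normH m (sigma_Mz m X f) \<le> (\<Sum>i\<in>UNIV. normH m (mult_z i (X (Aop m i f))))"
      unfolding sigma_eq[OF f] by (rule normH_sum[OF m1]) (auto intro: inH_mult_z[OF m1] h)
    also have "\<dots> \<le> (\<Sum>i\<in>(UNIV::'n set). C * normH m f)"
    proof (rule sum_mono)
      fix i
      have "normH m (mult_z i (X (Aop m i f))) \<le> normH m (X (Aop m i f))" by (rule normH_mult_z[OF m1 h])
      also have "\<dots> \<le> C * normH m (Aop m i f)" by (rule C(2)[OF inH_Aop[OF m1 f]])
      also have "\<dots> \<le> C * normH m f" using normH_Aop[OF m1 f, of i] C(1) by (rule mult_left_mono)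
      finally show "normH m (mult_z i (X (Aop m i f))) \<le> C * normH m f" .
    qed
    also have "\<dots> = (real CARD('n) * C) * normH m f" by simp
    finally show "normH m (sigma_Mz m X f) \<le> (real CARD('n) * C) * normH m f" .
  qed
qed

lemma bdd_funpow: "bdd_op m T \<Longrightarrow> bdd_op m ((sigma_Mz m ^^ k) T)"
  by (induction k) (auto intro: bdd_sigma)

lemma sigma_Suc: assumes "inH m f"
  shows "((sigma_Mz m ^^ Suc k) T) f = (\<Sum>i\<in>UNIV. mult_z i (((sigma_Mz m ^^ k) T) (Aop m i f)))"
  using sigma_eq[OF assms] by simp

end

definition shift :: "('n \<Rightarrow> nat) \<Rightarrow> 'n coeffs \<Rightarrow> 'n coeffs" where
  "shift \<gamma> g = (\<lambda>\<alpha>. if \<gamma> \<le> \<alpha> then g (\<alpha> - \<gamma>) else 0)"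

definition supp :: "'n coeffs \<Rightarrow> ('n \<Rightarrow> nat) set" where
  "supp p = {\<alpha>. p \<alpha> \<noteq> 0}"

lemma finite_le: "finite {\<gamma>::'n::finite \<Rightarrow> nat. \<gamma> \<le> \<alpha>}"
proof (rule finite_subset)
  show "{\<gamma>::'n \<Rightarrow> nat. \<gamma> \<le> \<alpha>} \<subseteq> PiE UNIV (\<lambda>i. {..\<alpha> i})"
    by (auto simp: le_fun_def PiE_UNIV_domain)
  show "finite (PiE UNIV (\<lambda>i. {..\<alpha> i}) :: ('n \<Rightarrow> nat) set)" by (rule finite_PiE) auto
qed

lemma cprod_alt: "cprod u v \<alpha> = (\<Sum>\<gamma>\<in>{\<gamma>. \<gamma> \<le> \<alpha>}. u (\<alpha> - \<gamma>) * v \<gamma>)"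
  unfolding cprod_def
proof (rule sum.reindex_bij_witness[of _ "\<lambda>\<beta>. \<alpha> - \<beta>" "\<lambda>\<beta>. \<alpha> - \<beta>"])
  fix \<beta> assume "\<beta> \<in> {\<beta>. \<beta> \<le> \<alpha>}"
  then have "\<beta> \<le> \<alpha>" by simp
  then show "\<alpha> - (\<alpha> - \<beta>) = \<beta>" by (auto simp: le_fun_def fun_eq_iff)
  show "\<alpha> - \<beta> \<in> {\<beta>. \<beta> \<le> \<alpha>}" by (auto simp: le_fun_def)
  show "u (\<alpha> - (\<alpha> - \<beta>)) * v (\<alpha> - \<beta>) = u \<beta> * v (\<alpha> - \<beta>)" using \<open>\<alpha> - (\<alpha> - \<beta>) = \<beta>\<close> by simp
next
  fix \<beta> assume "\<beta> \<in> {\<beta>. \<beta> \<le> \<alpha>}"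
  then have "\<beta> \<le> \<alpha>" by simp
  then show "\<alpha> - (\<alpha> - \<beta>) = \<beta>" by (auto simp: le_fun_def fun_eq_iff)
  show "\<alpha> - \<beta> \<in> {\<beta>. \<beta> \<le> \<alpha>}" by (auto simp: le_fun_def)
qed

lemma is_poly_emon: "is_poly (emon \<beta>)"
  unfolding is_poly_def emon_def by simp

lemma is_poly_Aop: assumes "is_poly p" shows "is_poly (Aop m i p)"
proof -
  have "{\<alpha>. Aop m i p \<alpha> \<noteq> 0} \<subseteq> up i -` {\<alpha>. p \<alpha> \<noteq> 0}" unfolding Aop_def by auto
  moreover have "finite (up i -` {\<alpha>. p \<alpha> \<noteq> 0})"
    using assms unfolding is_poly_def by (rule finite_vimageI) (meson injI up_inj)
  ultimately show ?thesis unfolding is_poly_def by (rule finite_subset)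
qed

lemma is_poly_mult_z: assumes "is_poly p" shows "is_poly (mult_z i p)"
proof -
  have "{\<alpha>. mult_z i p \<alpha> \<noteq> 0} \<subseteq> up i ` {\<alpha>. p \<alpha> \<noteq> 0}"
  proof
    fix \<alpha> assume "\<alpha> \<in> {\<alpha>. mult_z i p \<alpha> \<noteq> 0}"
    then have a: "\<alpha> i \<noteq> 0" "p (\<alpha>(i := \<alpha> i - 1)) \<noteq> 0" unfolding mult_z_def by (auto split: if_splits)
    then show "\<alpha> \<in> up i ` {\<alpha>. p \<alpha> \<noteq> 0}" using up_down[of \<alpha> i] by (metis (mono_tags, lifting) image_eqI mem_Collect_eq)
  qed
  then show ?thesis using assms unfolding is_poly_def by (meson finite_imageI finite_subset)
qed

lemma is_poly_mult: assumes "is_poly p" shows "is_poly (\<lambda>\<alpha>. c \<alpha> * p \<alpha>)"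
  using assms unfolding is_poly_def by (rule finite_subset[rotated]) auto

lemma is_poly_smul: assumes "is_poly p" shows "is_poly (smul c p)"
  using is_poly_mult[OF assms, of "\<lambda>_. c"] unfolding smul_def .

lemma is_poly_add: assumes "is_poly p" "is_poly q" shows "is_poly (p + q)"
proof -
  have "{\<alpha>. (p + q) \<alpha> \<noteq> 0} \<subseteq> {\<alpha>. p \<alpha> \<noteq> 0} \<union> {\<alpha>. q \<alpha> \<noteq> 0}" by auto
  then show ?thesis using assms unfolding is_poly_def by (meson finite_Un finite_subset)
qed

lemma is_poly_zero: "is_poly 0"
  unfolding is_poly_def by simp

lemma is_poly_sum: "finite I \<Longrightarrow> (\<And>i. i \<in> I \<Longrightarrow> is_poly (f i)) \<Longrightarrow> is_poly (\<Sum>i\<in>I. f i)"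
  by (induction I rule: finite_induct) (auto intro: is_poly_add is_poly_zero)

lemma shift_up: "shift (up i \<gamma>) g = mult_z i (shift \<gamma> g)"
proof
  fix \<alpha>
  show "shift (up i \<gamma>) g \<alpha> = mult_z i (shift \<gamma> g) \<alpha>"
  proof (cases "\<alpha> i = 0")
    case True
    have "\<not> up i \<gamma> \<le> \<alpha>"
    proof
      assume "up i \<gamma> \<le> \<alpha>"
      then have "up i \<gamma> i \<le> \<alpha> i" unfolding le_fun_def by blast
      then show False using True by simp
    qed
    then show ?thesis using True by (simp add: shift_def mult_z_zero)
  next
    case False
    have e1: "up i \<gamma> \<le> \<alpha> \<longleftrightarrow> \<gamma> \<le> \<alpha>(i := \<alpha> i - 1)"
      unfolding le_fun_def
    proof (intro iffI allI)
      fix j assume h: "\<forall>j. up i \<gamma> j \<le> \<alpha> j"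
      show "\<gamma> j \<le> (\<alpha>(i := \<alpha> i - 1)) j" using h[rule_format, of j] by (cases "j = i") (auto simp: up_def)
    next
      fix j assume h: "\<forall>j. \<gamma> j \<le> (\<alpha>(i := \<alpha> i - 1)) j"
      show "up i \<gamma> j \<le> \<alpha> j" using h[rule_format, of j] False by (cases "j = i") (auto simp: up_def)
    qed
    have e2: "\<alpha> - up i \<gamma> = \<alpha>(i := \<alpha> i - 1) - \<gamma>"
      unfolding up_def by (auto simp: fun_eq_iff)
    show ?thesis using False unfolding shift_def mult_z_def e1 e2 by simp
  qed
qed

lemma shift0: "shift 0 g = g"
  unfolding shift_def by simp

context fixes m :: nat assumes m1: "1 \<le> m"
begin

lemma inH_shift: assumes "inH m g" shows "inH m (shift \<gamma> g)"
proof (induction "mdeg \<gamma>" arbitrary: \<gamma>)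
  case 0
  then have "\<gamma> = 0" using mdeg_eq_0_iff by metis
  then have "shift \<gamma> g = g" unfolding shift_def by simp
  then show ?case using assms by simp
next
  case (Suc n)
  then obtain i where i: "\<gamma> i \<noteq> 0" using mdeg_eq_0_iff by (metis nat.distinct(1) zero_fun_apply ext)
  define \<gamma>' where "\<gamma>' = \<gamma>(i := \<gamma> i - 1)"
  have u: "up i \<gamma>' = \<gamma>" unfolding \<gamma>'_def by (rule up_down[of \<gamma> i, OF i])
  have "mdeg \<gamma>' = n" using Suc(2) mdeg_up[of i \<gamma>'] u by simp
  then have "inH m (shift \<gamma>' g)" using Suc(1) by simp
  then show ?case unfolding u[symmetric] shift_up by (rule inH_mult_z[OF m1])
qed

end

lemma cprod_poly: assumes "is_poly p"
  shows "cprod g p = (\<Sum>\<gamma>\<in>supp p. smul (p \<gamma>) (shift \<gamma> g))"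
proof
  fix \<alpha>
  have f1: "finite (supp p)" using assms unfolding is_poly_def supp_def .
  have "cprod g p \<alpha> = (\<Sum>\<gamma>\<in>{\<gamma>. \<gamma> \<le> \<alpha>}. g (\<alpha> - \<gamma>) * p \<gamma>)" by (rule cprod_alt)
  also have "\<dots> = (\<Sum>\<gamma>\<in>{\<gamma>. \<gamma> \<le> \<alpha>} \<inter> supp p. g (\<alpha> - \<gamma>) * p \<gamma>)"
    by (rule sum.mono_neutral_right) (auto simp: finite_le supp_def)
  also have "\<dots> = (\<Sum>\<gamma>\<in>{\<gamma>\<in>supp p. \<gamma> \<le> \<alpha>}. p \<gamma> * g (\<alpha> - \<gamma>))"
    by (rule sum.cong) (auto simp: mult.commute)
  also have "\<dots> = (\<Sum>\<gamma>\<in>supp p. if \<gamma> \<le> \<alpha> then p \<gamma> * g (\<alpha> - \<gamma>) else 0)"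
    by (rule sum.inter_filter[OF f1])
  also have "\<dots> = (\<Sum>\<gamma>\<in>supp p. smul (p \<gamma>) (shift \<gamma> g)) \<alpha>"
    unfolding fun_sum_apply smul_def shift_def by (rule sum.cong) auto
  finally show "cprod g p \<alpha> = (\<Sum>\<gamma>\<in>supp p. smul (p \<gamma>) (shift \<gamma> g)) \<alpha>" .
qed

lemma inH_cprod: assumes m1: "1 \<le> m" and "inH m g" "is_poly p" shows "inH m (cprod g p)"
  unfolding cprod_poly[OF assms(3)]
  using assms(3) unfolding is_poly_def supp_def
  by (intro inH_sum[OF m1] inH_smul[OF m1] inH_shift[OF m1 assms(2)]) auto

lemma cprod_mult_z: "mult_z i (cprod g a) = cprod g (mult_z i a)"
proof
  fix \<alpha>
  show "mult_z i (cprod g a) \<alpha> = cprod g (mult_z i a) \<alpha>"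
  proof (cases "\<alpha> i = 0")
    case True
    have "cprod g (mult_z i a) \<alpha> = 0"
      unfolding cprod_def using True by (intro sum.neutral) (auto simp: mult_z_zero)
    then show ?thesis using True by (simp add: mult_z_zero)
  next
    case False
    define \<alpha>' where "\<alpha>' = \<alpha>(i := \<alpha> i - 1)"
    have aa: "\<alpha>' \<le> \<alpha>" unfolding \<alpha>'_def le_fun_def by simp
    have sub: "{\<beta>. \<beta> \<le> \<alpha>'} \<subseteq> {\<beta>. \<beta> \<le> \<alpha>}" using aa order_trans by blast
    have "mult_z i (cprod g a) \<alpha> = cprod g a \<alpha>'"
      unfolding mult_z_def \<alpha>'_def using False by (simp only: if_False)
    also have "\<dots> = (\<Sum>\<beta>\<in>{\<beta>. \<beta> \<le> \<alpha>'}. g \<beta> * a (\<alpha>' - \<beta>))"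
      by (simp only: cprod_def)
    also have "\<dots> = (\<Sum>\<beta>\<in>{\<beta>. \<beta> \<le> \<alpha>}. g \<beta> * mult_z i a (\<alpha> - \<beta>))"
    proof (rule sum.mono_neutral_cong_left[OF finite_le sub], rule ballI)
      fix \<beta> assume b: "\<beta> \<in> {\<beta>. \<beta> \<le> \<alpha>} - {\<beta>. \<beta> \<le> \<alpha>'}"
      then have b1: "\<beta> \<le> \<alpha>" and b2: "\<not> \<beta> \<le> \<alpha>'" by auto
      from b2 obtain j where j: "\<not> \<beta> j \<le> \<alpha>' j" unfolding le_fun_def by auto
      have b1j: "\<beta> j \<le> \<alpha> j" using b1 unfolding le_fun_def by blast
      have "j = i" using j b1j unfolding \<alpha>'_def by (cases "j = i") auto
      then have "\<beta> i \<ge> \<alpha> i" using j False unfolding \<alpha>'_def by simp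
      moreover have "\<beta> i \<le> \<alpha> i" using b1 unfolding le_fun_def by blast
      ultimately have "\<beta> i = \<alpha> i" by simp
      then have "(\<alpha> - \<beta>) i = 0" by simp
      then show "g \<beta> * mult_z i a (\<alpha> - \<beta>) = 0" by (simp add: mult_z_zero)
    next
      fix \<beta> assume b: "\<beta> \<in> {\<beta>. \<beta> \<le> \<alpha>'}"
      then have "\<beta> i \<le> \<alpha>' i" unfolding le_fun_def by blast
      then have bi: "\<beta> i < \<alpha> i" using False unfolding \<alpha>'_def by simp
      have "(\<alpha> - \<beta>)(i := (\<alpha> - \<beta>) i - 1) = \<alpha>' - \<beta>" unfolding \<alpha>'_def by (auto simp: fun_eq_iff)
      then show "g \<beta> * a (\<alpha>' - \<beta>) = g \<beta> * mult_z i a (\<alpha> - \<beta>)"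
        using bi unfolding mult_z_def by simp
    qed
    also have "\<dots> = cprod g (mult_z i a) \<alpha>" by (simp only: cprod_def)
    finally show ?thesis .
  qed
qed

lemma cprod_add: "cprod g (a + b) = cprod g a + cprod g b"
  unfolding cprod_def by (auto simp: fun_eq_iff distrib_left sum.distrib)

lemma cprod_smul: "cprod g (smul c a) = smul c (cprod g a)"
  unfolding cprod_def smul_def by (auto simp: fun_eq_iff sum_distrib_left mult_ac)

lemma cprod_zero: "cprod g 0 = 0"
  unfolding cprod_def by (auto simp: fun_eq_iff)

lemma cprod_sum: "finite I \<Longrightarrow> cprod g (\<Sum>i\<in>I. f i) = (\<Sum>i\<in>I. cprod g (f i))"
proof (induction I rule: finite_induct)
  case empty
  show ?case by (simp only: sum.empty cprod_zero)
next
  case (insert x F)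
  show ?case by (simp only: sum.insert[OF insert(1,2)] cprod_add insert(3))
qed


context fixes m :: nat assumes m1: "1 \<le> m"
begin

lemma innerH_fin_right: assumes "finite S" "\<And>\<alpha>. \<alpha> \<notin> S \<Longrightarrow> z \<alpha> = 0"
  shows "innerH m x z = (\<Sum>\<alpha>\<in>S. x \<alpha> * cnj (z \<alpha>) / complex_of_real (rho m \<alpha>))"
proof -
  have "innerH m x z = (\<Sum>\<^sub>\<infinity>\<alpha>\<in>S. x \<alpha> * cnj (z \<alpha>) / complex_of_real (rho m \<alpha>))"
    unfolding innerH_def by (rule infsum_cong_neutral) (use assms(2) in auto)
  then show ?thesis using assms(1) by simp
qed

definition tz :: "'n::finite coeffs \<Rightarrow> 'n coeffs \<Rightarrow> 'n coeffs" where
  "tz h p = (\<lambda>\<gamma>. \<Sum>\<alpha>\<in>supp p. (if \<gamma> \<le> \<alpha> then cnj (h (\<alpha> - \<gamma>)) * p \<alpha> * complex_of_real (rho m \<gamma> / rho m \<alpha>) else 0))"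

lemma tz_supp: assumes "is_poly p" "\<gamma> \<notin> (\<Union>\<alpha>\<in>supp p. {\<gamma>. \<gamma> \<le> \<alpha>})" shows "tz h p \<gamma> = 0"
  using assms(2) unfolding tz_def by (intro sum.neutral) auto

lemma finite_Z: assumes "is_poly p" shows "finite (\<Union>\<alpha>\<in>supp p. {\<gamma>::'n::finite \<Rightarrow> nat. \<gamma> \<le> \<alpha>})"
  using assms unfolding is_poly_def supp_def by (intro finite_UN_I finite_le) auto

lemma inH_tz: assumes "is_poly p" shows "inH m (tz h p)"
proof (rule inH_finite_supp[OF m1])
  show "finite {\<alpha>. tz h p \<alpha> \<noteq> 0}"
    by (rule finite_subset[OF _ finite_Z[OF assms]]) (use tz_supp[OF assms] in blast)
qed

lemma tz_adj: fixes p x h :: "'n::finite coeffs" assumes p: "is_poly p"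
  shows "innerH m (cprod h x) p = innerH m x (tz h p)"
proof -
  define Z where "Z = (\<Union>\<alpha>\<in>supp p. {\<gamma>::'n \<Rightarrow> nat. \<gamma> \<le> \<alpha>})"
  have fS: "finite (supp p)" using p unfolding is_poly_def supp_def .
  have fZ: "finite Z" unfolding Z_def by (rule finite_Z[OF p])
  define F where "F = (\<lambda>\<alpha> \<gamma>. x \<gamma> * h (\<alpha> - \<gamma>) * cnj (p \<alpha>) / complex_of_real (rho m \<alpha>))"
  have "innerH m (cprod h x) p = (\<Sum>\<alpha>\<in>supp p. cprod h x \<alpha> * cnj (p \<alpha>) / complex_of_real (rho m \<alpha>))"
    by (rule innerH_fin_right[OF fS]) (auto simp: supp_def)
  also have "\<dots> = (\<Sum>\<alpha>\<in>supp p. \<Sum>\<gamma>\<in>{\<gamma>. \<gamma> \<le> \<alpha>}. F \<alpha> \<gamma>)"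
    unfolding cprod_alt F_def sum_distrib_right sum_divide_distrib
    by (rule sum.cong[OF refl], rule sum.cong[OF refl]) (simp add: mult_ac)
  also have "\<dots> = (\<Sum>\<alpha>\<in>supp p. \<Sum>\<gamma>\<in>{\<gamma>\<in>Z. \<gamma> \<le> \<alpha>}. F \<alpha> \<gamma>)"
  proof (rule sum.cong[OF refl])
    fix \<alpha> assume "\<alpha> \<in> supp p"
    then have "{\<gamma>. \<gamma> \<le> \<alpha>} = {\<gamma>\<in>Z. \<gamma> \<le> \<alpha>}" unfolding Z_def by auto
    then show "(\<Sum>\<gamma>\<in>{\<gamma>. \<gamma> \<le> \<alpha>}. F \<alpha> \<gamma>) = (\<Sum>\<gamma>\<in>{\<gamma>\<in>Z. \<gamma> \<le> \<alpha>}. F \<alpha> \<gamma>)" by simp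
  qed
  also have "\<dots> = (\<Sum>\<alpha>\<in>supp p. \<Sum>\<gamma>\<in>Z. if \<gamma> \<le> \<alpha> then F \<alpha> \<gamma> else 0)"
    by (rule sum.cong[OF refl]) (rule sum.inter_filter[OF fZ])
  also have "\<dots> = (\<Sum>\<gamma>\<in>Z. \<Sum>\<alpha>\<in>supp p. if \<gamma> \<le> \<alpha> then F \<alpha> \<gamma> else 0)"
    by (rule sum.swap)
  also have "\<dots> = (\<Sum>\<gamma>\<in>Z. x \<gamma> * cnj (tz h p \<gamma>) / complex_of_real (rho m \<gamma>))"
  proof (rule sum.cong[OF refl])
    fix \<gamma> :: "'n \<Rightarrow> nat"
    have r: "rho m \<gamma> > 0" by (rule rho_pos[OF m1])
    have "x \<gamma> * cnj (tz h p \<gamma>) / complex_of_real (rho m \<gamma>) =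
      (\<Sum>\<alpha>\<in>supp p. x \<gamma> * cnj (if \<gamma> \<le> \<alpha> then cnj (h (\<alpha> - \<gamma>)) * p \<alpha> * complex_of_real (rho m \<gamma> / rho m \<alpha>) else 0) / complex_of_real (rho m \<gamma>))"
      unfolding tz_def cnj_sum by (simp add: sum_distrib_left sum_divide_distrib)
    also have "\<dots> = (\<Sum>\<alpha>\<in>supp p. if \<gamma> \<le> \<alpha> then F \<alpha> \<gamma> else 0)"
    proof (rule sum.cong[OF refl])
      fix \<alpha> :: "'n \<Rightarrow> nat"
      have r2: "rho m \<alpha> > 0" by (rule rho_pos[OF m1])
      show "x \<gamma> * cnj (if \<gamma> \<le> \<alpha> then cnj (h (\<alpha> - \<gamma>)) * p \<alpha> * complex_of_real (rho m \<gamma> / rho m \<alpha>) else 0) / complex_of_real (rho m \<gamma>) =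
         (if \<gamma> \<le> \<alpha> then F \<alpha> \<gamma> else 0)"
        unfolding F_def using r r2 by (simp add: field_simps)
    qed
    finally show "(\<Sum>\<alpha>\<in>supp p. if \<gamma> \<le> \<alpha> then F \<alpha> \<gamma> else 0) = x \<gamma> * cnj (tz h p \<gamma>) / complex_of_real (rho m \<gamma>)" ..
  qed
  also have "\<dots> = innerH m x (tz h p)"
    by (rule innerH_fin_right[OF fZ, symmetric]) (use tz_supp[OF p] in \<open>auto simp: Z_def\<close>)
  finally show ?thesis .
qed

lemma Tmult_adj_eq: fixes h p :: "'n::finite coeffs" assumes h: "inH m h" and p: "is_poly p"
  shows "Tmult_adj m h p = tz h p"
  unfolding Tmult_adj_def
proof (rule the_equality)
  show "inH m (tz h p) \<and> (\<forall>x. inH m x \<longrightarrow> inH m (cprod h x) \<longrightarrow> innerH m (cprod h x) p = innerH m x (tz h p))"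
    using inH_tz[OF p] tz_adj[OF p] by blast
  fix z assume z: "inH m z \<and> (\<forall>x. inH m x \<longrightarrow> inH m (cprod h x) \<longrightarrow> innerH m (cprod h x) p = innerH m x z)"
  show "z = tz h p"
  proof
    fix \<gamma>
    have "innerH m (emon \<gamma>) z = innerH m (emon \<gamma>) (tz h p)"
      using z tz_adj[OF p] inH_emon[OF m1] inH_cprod[OF m1 h is_poly_emon] by metis
    then have "cnj (z \<gamma>) / complex_of_real (rho m \<gamma>) = cnj (tz h p \<gamma>) / complex_of_real (rho m \<gamma>)"
      by (simp add: innerH_emon_left[OF m1])
    then show "z \<gamma> = tz h p \<gamma>" using rho_pos[OF m1, of \<gamma>] by simp
  qed
qed

lemma T_poly_inner:
  fixes g h :: "'n::finite coeffs" and T :: "'n coeffs \<Rightarrow> 'n coeffs"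
  assumes g: "inH m g" and h: "inH m h"
    and TT: "\<forall>p. is_poly p \<longrightarrow> T p = cprod g p + Tmult_adj m h p"
    and p: "is_poly p" and q: "is_poly q"
  shows "innerH m (T p) q = innerH m (cprod g p) q + innerH m p (cprod h q)"
proof -
  have Tp: "T p = cprod g p + tz h p" using TT p Tmult_adj_eq[OF h p] by simp
  have "innerH m (T p) q = innerH m (cprod g p) q + innerH m (tz h p) q"
    unfolding Tp by (rule innerH_add_left[OF m1 inH_cprod[OF m1 g p] inH_tz[OF p] inH_poly[OF m1 q]])
  also have "innerH m (tz h p) q = cnj (innerH m q (tz h p))" by (rule innerH_cnj[OF m1])
  also have "\<dots> = cnj (innerH m (cprod h q) p)" by (simp add: tz_adj[OF p])
  also have "\<dots> = innerH m p (cprod h q)" by (simp add: innerH_cnj[OF m1, of p "cprod h q"])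
  finally show ?thesis .
qed

end

fun dd :: "nat \<Rightarrow> nat \<Rightarrow> nat \<Rightarrow> real" where
  "dd m 0 N = 1"
| "dd m (Suc k) N = dd m k (N - 1) * (real N / real (m + N - 1))"

lemma frac_aux: fixes a B q E s :: real
  assumes "B > 0" "q > 0" "s > 0" "q * B = E * s"
  shows "a / B * (s / q) = a / E"
proof -
  have "a / B * (s / q) = a * s / (q * B)" by (simp add: field_simps)
  also have "\<dots> = a * s / (E * s)" using assms(4) by simp
  also have "\<dots> = a / E" using assms(3) by simp
  finally show ?thesis .
qed

lemma dd_formula: assumes m1: "1 \<le> m"
  shows "dd m k N = (if k \<le> N then real ((m - 1 + N - k) choose (N - k)) / real ((m - 1 + N) choose N) else 0)"
proof (induction k arbitrary: N)
  case 0
  have "(m - 1 + N) choose N > 0" by (rule zero_less_binomial) simp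
  then show ?case by simp
next
  case (Suc k)
  show ?case
  proof (cases N)
    case 0
    then show ?thesis by simp
  next
    case (Suc N')
    have b: "real (m + N') * real ((m - 1 + N') choose N') = real ((m + N') choose Suc N') * real (Suc N')"
    proof -
      have nb: "Suc (m - 1 + N') = m + N'" using m1 by simp
      have "Suc (m - 1 + N') * ((m - 1 + N') choose N') = (Suc (m - 1 + N') choose Suc N') * Suc N'"
        by (rule Suc_times_binomial_eq)
      then have "(m + N') * ((m - 1 + N') choose N') = ((m + N') choose Suc N') * Suc N'" unfolding nb .
      then have "real ((m + N') * ((m - 1 + N') choose N')) = real (((m + N') choose Suc N') * Suc N')"
        by (rule arg_cong)
      then show ?thesis by (simp only: of_nat_mult)
    qed
    have p1: "real ((m - 1 + N') choose N') > 0" by simp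
    have p2: "real (m + N') > 0" using m1 by simp
    show ?thesis
    proof (cases "k \<le> N'")
      case True
      have "dd m (Suc k) N = real ((m - 1 + N' - k) choose (N' - k)) / real ((m - 1 + N') choose N') * (real (Suc N') / real (m + N'))"
        using Suc.IH[of N'] True \<open>N = Suc N'\<close> m1 by simp
      also have "\<dots> = real ((m - 1 + N' - k) choose (N' - k)) / real ((m + N') choose Suc N')"
        by (rule frac_aux[OF p1 p2 _ b]) simp
      finally show ?thesis using True \<open>N = Suc N'\<close> m1 by (simp add: Suc_diff_le)
    next
      case False
      then show ?thesis using Suc.IH[of N'] \<open>N = Suc N'\<close> by simp
    qed
  qed
qed

lemma neg1_pow: assumes "k \<le> N" shows "(-1::real) ^ (N - k) = (-1) ^ N * (-1) ^ k"
proof -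
  have "(-1::real) ^ ((N - k) + k) = (-1) ^ (N - k) * (-1) ^ k" by (rule power_add)
  then have e: "(-1::real) ^ N = (-1) ^ (N - k) * (-1) ^ k" using assms by simp
  have "(-1::real) ^ k * (-1) ^ k = ((-1) * (-1)) ^ k" by (rule power_mult_distrib[symmetric])
  then have k2: "(-1::real) ^ k * (-1) ^ k = 1" by simp
  have "(-1::real) ^ N * (-1) ^ k = (-1) ^ (N - k) * ((-1) ^ k * (-1) ^ k)" unfolding e by (simp only: mult.assoc)
  then show ?thesis unfolding k2 by simp
qed

lemma dd_identity: assumes m1: "1 \<le> m" and N: "1 \<le> N"
  shows "(\<Sum>k\<le>m. (-1) ^ k * real (m choose k) * dd m k N) = 0"
proof -
  define A where "A k = (-1) ^ k * real (m choose k) * real ((m - 1 + N - k) choose (N - k))" for k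
  define C0 where "C0 = real ((m - 1 + N) choose N)"
  have V: "(\<Sum>k=0..N. (real m gchoose k) * ((- real m) gchoose (N - k))) = 0"
    using gbinomial_Vandermonde[of "real m" "- real m" N] N by (simp add: gbinomial_0_left)
  have "(\<Sum>k=0..N. (real m gchoose k) * ((- real m) gchoose (N - k))) = (\<Sum>k=0..N. (-1) ^ N * A k)"
  proof (rule sum.cong[OF refl])
    fix k assume k: "k \<in> {0..N}"
    have e: "real m + real (N - k) - 1 = real (m - 1 + N - k)" using m1 k by (simp add: of_nat_diff)
    have "((- real m) gchoose (N - k)) = (-1) ^ (N - k) * real ((m - 1 + N - k) choose (N - k))"
      unfolding gbinomial_minus e binomial_gbinomial[symmetric] ..
    then show "(real m gchoose k) * ((- real m) gchoose (N - k)) = (-1) ^ N * A k"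
      unfolding A_def binomial_gbinomial[symmetric] using k neg1_pow[of k N] by simp
  qed
  then have SA: "(\<Sum>k=0..N. A k) = 0" using V by (simp add: sum_distrib_left[symmetric])
  have "(\<Sum>k\<le>m. (-1) ^ k * real (m choose k) * dd m k N) = (\<Sum>k\<le>m. if k \<le> N then A k / C0 else 0)"
    by (rule sum.cong[OF refl]) (simp add: dd_formula[OF m1] A_def C0_def)
  also have "\<dots> = (\<Sum>k\<in>{..m} \<inter> {..N}. A k / C0)"
    by (subst sum.inter_filter[symmetric]) (auto intro!: sum.cong)
  also have "\<dots> = (\<Sum>k=0..N. A k / C0)"
    by (rule sum.mono_neutral_left) (auto simp: A_def)
  also have "\<dots> = (\<Sum>k=0..N. A k) / C0" by (simp add: sum_divide_distrib)
  finally show ?thesis using SA by simp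
qed


definition Dk :: "nat \<Rightarrow> nat \<Rightarrow> 'n::finite coeffs \<Rightarrow> 'n coeffs" where
  "Dk m k f = (\<lambda>\<alpha>. complex_of_real (dd m k (mdeg \<alpha>)) * f \<alpha>)"

definition cc :: "nat \<Rightarrow> nat \<Rightarrow> complex" where
  "cc m k = of_int ((-1) ^ k) * of_nat (m choose k)"

definition Dl :: "nat \<Rightarrow> ('n::finite coeffs \<Rightarrow> 'n coeffs) \<Rightarrow> 'n coeffs \<Rightarrow> 'n coeffs" where
  "Dl m T v = (\<Sum>k\<le>m. smul (cc m k) (((sigma_Mz m) ^^ k) T v))"

lemma Dk0: "Dk m 0 f = f"
  unfolding Dk_def by simp

lemma is_poly_Dk: "is_poly p \<Longrightarrow> is_poly (Dk m k p)"
  unfolding Dk_def by (rule is_poly_mult)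

lemma Dk_emon: "Dk m k (emon \<beta>) = smul (complex_of_real (dd m k (mdeg \<beta>))) (emon \<beta>)"
  unfolding Dk_def smul_def emon_def by (rule ext) simp

context fixes m :: nat assumes m1: "1 \<le> m"
begin

lemma D_Suc: fixes f :: "'n::finite coeffs"
  shows "(\<Sum>i\<in>UNIV. mult_z i (Dk m k (Aop m i f))) = Dk m (Suc k) f"
proof
  fix \<alpha> :: "'n \<Rightarrow> nat"
  have "(\<Sum>i\<in>UNIV. mult_z i (Dk m k (Aop m i f))) \<alpha> =
    Mz (\<lambda>i. (\<lambda>\<beta>. complex_of_real (dd m k (mdeg \<beta>)) * Aop m i f \<beta>)) \<alpha>"
    unfolding Mz_def Dk_def ..
  also have "\<dots> = complex_of_real (dd m k (mdeg \<alpha> - 1)) * f \<alpha> * complex_of_real (real (mdeg \<alpha>) / real (m + mdeg \<alpha> - 1))"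
    by (rule Mz_Aop_c[OF m1])
  also have "\<dots> = Dk m (Suc k) f \<alpha>"
    unfolding Dk_def by (simp add: mult_ac)
  finally show "(\<Sum>i\<in>UNIV. mult_z i (Dk m k (Aop m i f))) \<alpha> = Dk m (Suc k) f \<alpha>" .
qed

lemma sigma_poly_inner:
  fixes g h :: "'n::finite coeffs" and T :: "'n coeffs \<Rightarrow> 'n coeffs"
  assumes g: "inH m g" and h: "inH m h" and Tb: "bdd_op m T"
    and TT: "\<forall>p. is_poly p \<longrightarrow> T p = cprod g p + Tmult_adj m h p"
  shows "is_poly p \<Longrightarrow> is_poly q \<Longrightarrow> innerH m (((sigma_Mz m) ^^ k) T p) q =
     innerH m (cprod g (Dk m k p)) q + innerH m p (cprod h (Dk m k q))"
proof (induction k arbitrary: p q)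
  case 0
  then show ?case using T_poly_inner[OF m1 g h TT] by (simp add: Dk0)
next
  case (Suc k)
  note p = Suc.prems(1) and q = Suc.prems(2)
  let ?X = "(sigma_Mz m ^^ k) T"
  have Xb: "bdd_op m ?X" by (rule bdd_funpow[OF m1 Tb])
  have pA: "\<And>i. is_poly (Aop m i p)" using is_poly_Aop[OF p] .
  have qA: "\<And>i. is_poly (Aop m i q)" using is_poly_Aop[OF q] .
  have Yi: "\<And>i. inH m (?X (Aop m i p))" using bdd_inH[OF m1 Xb] inH_poly[OF m1 pA] by blast
  have qH: "inH m q" by (rule inH_poly[OF m1 q])
  have pH: "inH m p" by (rule inH_poly[OF m1 p])
  define X1 where "X1 i = Dk m k (Aop m i p)" for i
  define W1 where "W1 i = Dk m k (Aop m i q)" for i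
  have X1p: "is_poly (mult_z i (X1 i))" for i unfolding X1_def by (intro is_poly_mult_z is_poly_Dk pA)
  have W1p: "is_poly (mult_z i (W1 i))" for i unfolding W1_def by (intro is_poly_mult_z is_poly_Dk qA)
  have "innerH m (((sigma_Mz m) ^^ Suc k) T p) q = innerH m (\<Sum>i\<in>UNIV. mult_z i (?X (Aop m i p))) q"
    by (simp only: sigma_Suc[OF m1 pH])
  also have "\<dots> = (\<Sum>i\<in>UNIV. innerH m (mult_z i (?X (Aop m i p))) q)"
    by (rule innerH_sum_left[OF m1]) (auto intro: inH_mult_z[OF m1] Yi qH)
  also have "\<dots> = (\<Sum>i\<in>UNIV. innerH m (?X (Aop m i p)) (Aop m i q))"
    by (simp only: adj_mult_z[OF m1])
  also have "\<dots> = (\<Sum>i\<in>UNIV. innerH m (cprod g (X1 i)) (Aop m i q) + innerH m (Aop m i p) (cprod h (W1 i)))"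
    unfolding X1_def W1_def using Suc.IH[OF pA qA] by simp
  also have "\<dots> = (\<Sum>i\<in>UNIV. innerH m (cprod g (mult_z i (X1 i))) q + innerH m p (cprod h (mult_z i (W1 i))))"
  proof (rule sum.cong[OF refl])
    fix i
    have a: "innerH m (cprod g (X1 i)) (Aop m i q) = innerH m (cprod g (mult_z i (X1 i))) q"
      by (simp only: adj_mult_z[OF m1, symmetric] cprod_mult_z)
    have "innerH m (Aop m i p) (cprod h (W1 i)) = cnj (innerH m (cprod h (W1 i)) (Aop m i p))"
      by (rule innerH_cnj[OF m1])
    also have "\<dots> = cnj (innerH m (mult_z i (cprod h (W1 i))) p)"
      by (simp only: adj_mult_z[OF m1])
    also have "\<dots> = innerH m p (mult_z i (cprod h (W1 i)))"
      by (rule innerH_cnj[OF m1, symmetric])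
    also have "\<dots> = innerH m p (cprod h (mult_z i (W1 i)))" by (simp only: cprod_mult_z)
    finally show "innerH m (cprod g (X1 i)) (Aop m i q) + innerH m (Aop m i p) (cprod h (W1 i)) =
      innerH m (cprod g (mult_z i (X1 i))) q + innerH m p (cprod h (mult_z i (W1 i)))" using a by simp
  qed
  also have "\<dots> = (\<Sum>i\<in>UNIV. innerH m (cprod g (mult_z i (X1 i))) q) + (\<Sum>i\<in>UNIV. innerH m p (cprod h (mult_z i (W1 i))))"
    by (rule sum.distrib)
  also have "(\<Sum>i\<in>UNIV. innerH m (cprod g (mult_z i (X1 i))) q) = innerH m (\<Sum>i\<in>UNIV. cprod g (mult_z i (X1 i))) q"
    by (rule innerH_sum_left[OF m1, symmetric]) (auto intro: inH_cprod[OF m1 g] X1p qH)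
  also have "(\<Sum>i\<in>UNIV. cprod g (mult_z i (X1 i))) = cprod g (Dk m (Suc k) p)"
    unfolding cprod_sum[OF finite, symmetric] X1_def D_Suc ..
  also have "(\<Sum>i\<in>UNIV. innerH m p (cprod h (mult_z i (W1 i)))) = innerH m p (\<Sum>i\<in>UNIV. cprod h (mult_z i (W1 i)))"
    by (rule innerH_sum_right[OF m1, symmetric]) (auto intro: inH_cprod[OF m1 h] W1p pH)
  also have "(\<Sum>i\<in>UNIV. cprod h (mult_z i (W1 i))) = cprod h (Dk m (Suc k) q)"
    unfolding cprod_sum[OF finite, symmetric] W1_def D_Suc ..
  finally show ?case .
qed

end

lemma cc_real: "cc m k = complex_of_real ((-1) ^ k * real (m choose k))"
  unfolding cc_def by simp

lemma sdd_zero: assumes m1: "1 \<le> m" and N: "1 \<le> N"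
  shows "(\<Sum>k\<le>m. cc m k * complex_of_real (dd m k N)) = 0"
proof -
  have "(\<Sum>k\<le>m. cc m k * complex_of_real (dd m k N)) = complex_of_real (\<Sum>k\<le>m. (-1) ^ k * real (m choose k) * dd m k N)"
    unfolding cc_real of_real_sum by (simp add: of_real_mult)
  also have "\<dots> = 0" using dd_identity[OF m1 N] by simp
  finally show ?thesis .
qed

lemma Dl_apply: "Dl m T v \<beta> = (\<Sum>k\<le>m. cc m k * ((sigma_Mz m ^^ k) T v) \<beta>)"
  unfolding Dl_def fun_sum_apply smul_def ..

context fixes m :: nat assumes m1: "1 \<le> m"
begin

lemma Dl_poly_zero:
  fixes g h :: "'n::finite coeffs" and T :: "'n coeffs \<Rightarrow> 'n coeffs"
  assumes g: "inH m g" and h: "inH m h" and Tb: "bdd_op m T"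
    and TT: "\<forall>p. is_poly p \<longrightarrow> T p = cprod g p + Tmult_adj m h p"
    and p: "is_poly p" and p0: "p 0 = 0" and b: "\<beta> \<noteq> 0"
  shows "Dl m T p \<beta> = 0"
proof -
  define I0 where "I0 = innerH m p (cprod h (emon \<beta>))"
  have r: "rho m \<beta> > 0" by (rule rho_pos[OF m1])
  have e1: "((sigma_Mz m ^^ k) T p) \<beta> = cprod g (Dk m k p) \<beta> +
      complex_of_real (rho m \<beta>) * (complex_of_real (dd m k (mdeg \<beta>)) * I0)" for k
  proof -
    have "innerH m ((sigma_Mz m ^^ k) T p) (emon \<beta>) =
      innerH m (cprod g (Dk m k p)) (emon \<beta>) + innerH m p (cprod h (Dk m k (emon \<beta>)))"
      by (rule sigma_poly_inner[OF m1 g h Tb TT p is_poly_emon])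
    also have "innerH m p (cprod h (Dk m k (emon \<beta>))) = complex_of_real (dd m k (mdeg \<beta>)) * I0"
      unfolding Dk_emon cprod_smul innerH_smul_right[OF m1] I0_def by simp
    finally have "((sigma_Mz m ^^ k) T p) \<beta> / complex_of_real (rho m \<beta>) =
       cprod g (Dk m k p) \<beta> / complex_of_real (rho m \<beta>) + complex_of_real (dd m k (mdeg \<beta>)) * I0"
      by (simp only: innerH_emon_right[OF m1])
    then show ?thesis using r by (simp add: field_simps)
  qed
  have N: "1 \<le> mdeg \<beta>" using b mdeg_eq_0_iff by (metis less_one not_le)
  have A: "(\<Sum>k\<le>m. cc m k * cprod g (Dk m k p) \<beta>) = 0"
  proof -
    have "(\<Sum>k\<le>m. cc m k * cprod g (Dk m k p) \<beta>) =
      (\<Sum>k\<le>m. \<Sum>\<gamma>\<in>{\<gamma>. \<gamma> \<le> \<beta>}. cc m k * (g \<gamma> * (complex_of_real (dd m k (mdeg (\<beta> - \<gamma>))) * p (\<beta> - \<gamma>))))"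
      unfolding cprod_def Dk_def by (simp add: sum_distrib_left)
    also have "\<dots> = (\<Sum>\<gamma>\<in>{\<gamma>. \<gamma> \<le> \<beta>}. \<Sum>k\<le>m. cc m k * (g \<gamma> * (complex_of_real (dd m k (mdeg (\<beta> - \<gamma>))) * p (\<beta> - \<gamma>))))"
      by (rule sum.swap)
    also have "\<dots> = (\<Sum>\<gamma>\<in>{\<gamma>. \<gamma> \<le> \<beta>}. g \<gamma> * p (\<beta> - \<gamma>) * (\<Sum>k\<le>m. cc m k * complex_of_real (dd m k (mdeg (\<beta> - \<gamma>)))))"
      by (rule sum.cong[OF refl]) (simp add: sum_distrib_left mult_ac)
    also have "\<dots> = 0"
    proof (rule sum.neutral, rule ballI)
      fix \<gamma> assume "\<gamma> \<in> {\<gamma>. \<gamma> \<le> \<beta>}"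
      show "g \<gamma> * p (\<beta> - \<gamma>) * (\<Sum>k\<le>m. cc m k * complex_of_real (dd m k (mdeg (\<beta> - \<gamma>)))) = 0"
      proof (cases "p (\<beta> - \<gamma>) = 0")
        case True then show ?thesis by simp
      next
        case False
        then have "\<beta> - \<gamma> \<noteq> 0" using p0 by auto
        then have "1 \<le> mdeg (\<beta> - \<gamma>)" using mdeg_eq_0_iff by (metis less_one not_le)
        then show ?thesis using sdd_zero[OF m1] by simp
      qed
    qed
    finally show ?thesis .
  qed
  have "Dl m T p \<beta> = (\<Sum>k\<le>m. cc m k * cprod g (Dk m k p) \<beta> +
      complex_of_real (rho m \<beta>) * I0 * (cc m k * complex_of_real (dd m k (mdeg \<beta>))))"
    unfolding Dl_apply e1 by (rule sum.cong[OF refl]) (simp add: algebra_simps)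
  also have "\<dots> = (\<Sum>k\<le>m. cc m k * cprod g (Dk m k p) \<beta>) +
      complex_of_real (rho m \<beta>) * I0 * (\<Sum>k\<le>m. cc m k * complex_of_real (dd m k (mdeg \<beta>)))"
    by (simp add: sum.distrib sum_distrib_left)
  also have "\<dots> = 0" using A sdd_zero[OF m1 N] by simp
  finally show ?thesis .
qed

lemma trunc_approx: fixes u :: "'n::finite coeffs" assumes u: "inH m u" and e: "e > 0"
  shows "\<exists>p. is_poly p \<and> p 0 = u 0 \<and> normH m (u - p) < e"
proof -
  define \<phi> where "\<phi> \<alpha> = (cmod (u \<alpha>))\<^sup>2 / rho m \<alpha>" for \<alpha>
  have s: "\<phi> summable_on UNIV" using u unfolding inH_def \<phi>_def .
  have nn: "\<And>\<alpha>. \<phi> \<alpha> \<ge> 0" unfolding \<phi>_def by (rule sq_term_nonneg[OF m1])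
  have ee: "e\<^sup>2 / 2 > 0" using e by simp
  obtain F0 where F0: "finite F0" "dist (sum \<phi> F0) (infsum \<phi> UNIV) \<le> e\<^sup>2 / 2"
    using infsum_finite_approximation[OF s ee] by blast
  define F1 where "F1 = insert 0 F0"
  have fF1: "finite F1" unfolding F1_def using F0(1) by simp
  define p where "p \<alpha> = (if \<alpha> \<in> F1 then u \<alpha> else 0)" for \<alpha>
  have pp: "is_poly p" unfolding is_poly_def p_def by (rule finite_subset[OF _ fF1]) auto
  have p0: "p 0 = u 0" unfolding p_def F1_def by simp
  have nsq_u: "nsq m u = infsum \<phi> UNIV" unfolding nsq_def \<phi>_def ..
  have le0: "sum \<phi> F0 \<le> infsum \<phi> UNIV"
    by (rule finite_sum_le_infsum[OF s F0(1)]) (auto intro: nn)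
  have le1: "sum \<phi> F0 \<le> sum \<phi> F1"
    by (rule sum_mono2[OF fF1]) (auto simp: F1_def intro: nn)
  have sC: "\<phi> summable_on (- F1)" by (rule summable_on_subset[OF s]) auto
  have split: "infsum \<phi> UNIV = sum \<phi> F1 + infsum \<phi> (- F1)"
  proof -
    have "infsum \<phi> (F1 \<union> - F1) = infsum \<phi> F1 + infsum \<phi> (- F1)"
      by (rule infsum_Un_disjoint) (use sC fF1 in auto)
    moreover have "F1 \<union> - F1 = UNIV" by auto
    ultimately show ?thesis using fF1 by simp
  qed
  have nd: "nsq m (u - p) = infsum \<phi> (- F1)"
    unfolding nsq_def by (rule infsum_cong_neutral) (auto simp: p_def \<phi>_def)
  have "nsq m (u - p) \<le> e\<^sup>2 / 2"
    using nd split le0 le1 F0(2) by (simp add: dist_real_def)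
  also have "\<dots> < e\<^sup>2" using e by simp
  finally have "nsq m (u - p) < e\<^sup>2" .
  then have "sqrt (nsq m (u - p)) < sqrt (e\<^sup>2)" by (rule real_sqrt_less_mono)
  then have "normH m (u - p) < e"
    using e normH_nsq[OF m1 inH_diff[OF m1 u inH_poly[OF m1 pp]]] by simp
  then show ?thesis using pp p0 by blast
qed

lemma coef_cont: fixes X :: "'n::finite coeffs \<Rightarrow> 'n coeffs" assumes "bdd_op m X"
  shows "\<exists>C\<ge>0. \<forall>v. inH m v \<longrightarrow> cmod (X v \<beta>) \<le> C * normH m v"
proof -
  obtain C where C: "C \<ge> 0" "\<And>f. inH m f \<Longrightarrow> normH m (X f) \<le> C * normH m f"
    using bdd_bound[OF m1 assms] by blast
  have "cmod (X v \<beta>) \<le> (sqrt (rho m \<beta>) * C) * normH m v" if v: "inH m v" for v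
  proof -
    have "cmod (X v \<beta>) \<le> sqrt (rho m \<beta>) * normH m (X v)"
      by (rule coef_bound[OF m1 bdd_inH[OF m1 assms v]])
    also have "\<dots> \<le> sqrt (rho m \<beta>) * (C * normH m v)"
      by (rule mult_left_mono[OF C(2)[OF v]]) (simp add: less_imp_le[OF rho_pos[OF m1]])
    finally show ?thesis by (simp add: mult_ac)
  qed
  moreover have "sqrt (rho m \<beta>) * C \<ge> 0" using C(1) rho_pos[OF m1, of \<beta>] by simp
  ultimately show ?thesis by blast
qed

lemma Dl_zero:
  fixes g h :: "'n::finite coeffs" and T :: "'n coeffs \<Rightarrow> 'n coeffs"
  assumes g: "inH m g" and h: "inH m h" and Tb: "bdd_op m T"
    and TT: "\<forall>p. is_poly p \<longrightarrow> T p = cprod g p + Tmult_adj m h p"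
    and u: "inH m u" and u0: "u 0 = 0" and b: "\<beta> \<noteq> 0"
  shows "Dl m T u \<beta> = 0"
proof -
  have ex: "\<forall>k. \<exists>C. C \<ge> 0 \<and> (\<forall>v. inH m v \<longrightarrow> cmod (((sigma_Mz m ^^ k) T) v \<beta>) \<le> C * normH m v)"
    using coef_cont[OF bdd_funpow[OF m1 Tb]] by blast
  obtain Cf where Cf: "\<forall>k. Cf k \<ge> 0 \<and> (\<forall>v. inH m v \<longrightarrow> cmod (((sigma_Mz m ^^ k) T) v \<beta>) \<le> Cf k * normH m v)"
    using choice[OF ex] by blast
  define K where "K = (\<Sum>k\<le>m. cmod (cc m k) * Cf k)"
  have K0: "K \<ge> 0" unfolding K_def using Cf by (intro sum_nonneg mult_nonneg_nonneg) auto
  have "cmod (Dl m T u \<beta>) \<le> K * e" if e: "e > 0" for e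
  proof -
    obtain p where p: "is_poly p" "p 0 = u 0" "normH m (u - p) < e" using trunc_approx[OF u e] by blast
    have pH: "inH m p" by (rule inH_poly[OF m1 p(1)])
    have w: "inH m (u - p)" by (rule inH_diff[OF m1 u pH])
    have "Dl m T p \<beta> = 0" by (rule Dl_poly_zero[OF g h Tb TT p(1)]) (use p(2) u0 b in auto)
    then have "Dl m T u \<beta> = Dl m T u \<beta> - Dl m T p \<beta>" by simp
    also have "\<dots> = (\<Sum>k\<le>m. cc m k * ((sigma_Mz m ^^ k) T (u - p)) \<beta>)"
      unfolding Dl_apply sum_subtractf[symmetric]
      by (rule sum.cong[OF refl]) (simp add: bdd_diff[OF m1 bdd_funpow[OF m1 Tb] u pH] right_diff_distrib)
    finally have "cmod (Dl m T u \<beta>) \<le> (\<Sum>k\<le>m. cmod (cc m k * ((sigma_Mz m ^^ k) T (u - p)) \<beta>))"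
      by (simp add: norm_sum)
    also have "\<dots> \<le> (\<Sum>k\<le>m. cmod (cc m k) * (Cf k * normH m (u - p)))"
      by (rule sum_mono) (use Cf w in \<open>auto simp: norm_mult intro: mult_left_mono\<close>)
    also have "\<dots> = K * normH m (u - p)" unfolding K_def sum_distrib_right
      by (rule sum.cong[OF refl]) (simp add: mult_ac)
    also have "\<dots> \<le> K * e" using p(3) K0 by (intro mult_left_mono) auto
    finally show ?thesis .
  qed
  then have "cmod (Dl m T u \<beta>) \<le> 0" by (intro small_imp_0[OF m1 K0]) auto
  then show ?thesis by simp
qed

end

theorem theorem5:
  fixes m :: nat and g h :: "'n::finite coeffs" and T :: "'n coeffs \<Rightarrow> 'n coeffs"
  assumes "m \<ge> 1"
    and "inH m g" and "inH m h"
    and "bdd_op m T"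
    and "\<forall>p. is_poly p \<longrightarrow> T p = cprod g p + Tmult_adj m h p"
  shows "\<forall>F. inHn m F \<longrightarrow>
    Mz'_adj m (T (Mz' m F)) =
    P_Im m (\<lambda>i. (\<lambda>f. \<Sum>j<m. smul (of_int ((-1) ^ j) * of_nat (m choose (j + 1)))
                              (((sigma_Mz m) ^^ j) T f)) (P_Im m F i))"
proof (intro allI impI)
  fix F :: "'n \<Rightarrow> 'n coeffs" assume F: "inHn m F"
  have m1: "1 \<le> m" using assms(1) by simp
  note g = assms(2) and h = assms(3) and Tb = assms(4) and TT = assms(5)
  define u where "u = Mz' m F"
  have uH: "inH m u" unfolding u_def by (rule inH_Mz'[OF m1 F])
  have u0: "u 0 = 0" unfolding u_def Mz'_def delta_def by (simp add: Mz_at0 mdeg_def)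
  have TuH: "inH m (T u)" by (rule bdd_inH[OF m1 Tb uH])
  define c where "c j = (of_int ((-1) ^ j) * of_nat (m choose (j + 1)) :: complex)" for j
  define S where "S f = (\<Sum>j<m. smul (c j) (((sigma_Mz m) ^^ j) T f))" for f
  have SH: "inH m (S f)" if "inH m f" for f
    unfolding S_def by (intro inH_sum[OF m1] inH_smul[OF m1] bdd_inH[OF m1 bdd_funpow[OF m1 Tb] that]) auto
  have PF: "P_Im m F = (\<lambda>i. Aop m i u)"
    unfolding P_Im_eq[OF m1 F] u_def Mz'_def ..
  define G where "G = (\<lambda>i. S (Aop m i u))"
  have GH: "inHn m G" unfolding G_def inHn_def using SH inH_Aop[OF m1 uH] by blast
  have rhs_arg: "(\<lambda>i. (\<lambda>f. \<Sum>j<m. smul (of_int ((-1) ^ j) * of_nat (m choose (j + 1)))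
                              (((sigma_Mz m) ^^ j) T f)) (P_Im m F i)) = G"
    unfolding G_def S_def c_def PF ..
  have RHS: "P_Im m G = (\<lambda>i. Aop m i (delta m (Mz G)))" by (rule P_Im_eq[OF m1 GH])
  have LHS: "Mz'_adj m (T u) = (\<lambda>i. Aop m i (delta m (T u)))" by (rule Mz'_adj_eq[OF m1 TuH])
  have MzG: "Mz G = (\<Sum>j<m. smul (c j) (((sigma_Mz m) ^^ Suc j) T u))"
  proof -
    have "Mz G = (\<Sum>i\<in>UNIV. \<Sum>j<m. smul (c j) (mult_z i (((sigma_Mz m) ^^ j) T (Aop m i u))))"
      unfolding Mz_def G_def S_def by (simp only: mult_z_sum mult_z_smul)
    also have "\<dots> = (\<Sum>j<m. \<Sum>i\<in>UNIV. smul (c j) (mult_z i (((sigma_Mz m) ^^ j) T (Aop m i u))))"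
      by (rule sum.swap)
    also have "\<dots> = (\<Sum>j<m. smul (c j) (((sigma_Mz m) ^^ Suc j) T u))"
      by (simp only: smul_sum[symmetric] sigma_Suc[OF m1 uH])
    finally show ?thesis .
  qed
  have key: "T u \<beta> = Mz G \<beta>" if b: "\<beta> \<noteq> 0" for \<beta>
  proof -
    have D0: "Dl m T u \<beta> = 0" by (rule Dl_zero[OF m1 g h Tb TT uH u0 b])
    have mS: "m = Suc (m - 1)" using m1 by simp
    have "Dl m T u \<beta> = (\<Sum>k\<le>Suc (m - 1). cc m k * ((sigma_Mz m ^^ k) T u) \<beta>)"
      unfolding Dl_apply using mS by simp
    also have "\<dots> = cc m 0 * ((sigma_Mz m ^^ 0) T u) \<beta> + (\<Sum>j\<le>m - 1. cc m (Suc j) * ((sigma_Mz m ^^ Suc j) T u) \<beta>)"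
      by (rule sum.atMost_Suc_shift)
    also have "(\<Sum>j\<le>m - 1. cc m (Suc j) * ((sigma_Mz m ^^ Suc j) T u) \<beta>) =
        (\<Sum>j<m. - (c j * ((sigma_Mz m ^^ Suc j) T u) \<beta>))"
    proof -
      have "{..m - 1} = {..<m}" using m1 by auto
      then show ?thesis unfolding c_def cc_def by (intro sum.cong) auto
    qed
    also have "\<dots> = - Mz G \<beta>"
      unfolding MzG fun_sum_apply smul_def by (simp add: sum_negf)
    finally have "Dl m T u \<beta> = T u \<beta> - Mz G \<beta>" by (simp add: cc_def)
    then show ?thesis using D0 by simp
  qed
  have "Mz'_adj m (T u) = P_Im m G"
    unfolding LHS RHS
  proof (intro ext)
    fix i \<alpha>
    show "Aop m i (delta m (T u)) \<alpha> = Aop m i (delta m (Mz G)) \<alpha>"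
      unfolding Aop_def delta_eq[OF m1] using key[OF up_ne0[of i \<alpha>]] by simp
  qed
  then show "Mz'_adj m (T (Mz' m F)) =
    P_Im m (\<lambda>i. (\<lambda>f. \<Sum>j<m. smul (of_int ((-1) ^ j) * of_nat (m choose (j + 1)))
                              (((sigma_Mz m) ^^ j) T f)) (P_Im m F i))"
    unfolding rhs_arg u_def .
qed


end
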